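(* Assume that $R$ is not isomorphic to $R^*$. Then every $G_0$-equivariant endomorphism of $V\oplus V^*$, transported via $\varepsilon$, has the form $(\mathsf A\otimes\mathrm{Id}_R)\oplus(\mathsf D\otimes\mathrm{Id}_{R^*})$ with $\mathsf A\in\mathrm{End}(H)$ and $\mathsf D\in\mathrm{End}(H^* )$. Such a map respects the canonical symmetric bilinear form $b$ on $V\oplus V^*$ if and only if $\mathsf A\oplus\mathsf D\in\mathrm{End}(H\oplus H^* )$ respects the canonical symmetric bilinear form \[s(h_1+f_1,h_2+f_2)=f_1(h_2)+f_2(h_1)\] on $H\oplus H^*$.
   Context: Setting: - $G_0$ is a compact group, and $R$ is a finite-dimensional irreducible unitary $G_0$-representation. - $V$ is a finite-dimensional unitary $G_0$-representation all of whose irreducible subrepresentations are isomorphic to $R$. Duals carry the action $g(f)=f\circ g^{-1}$. - $b(v_1+f_1,v_2+f_2)=f_1(v_2)+f_2(v_1)$ on $V\oplus V^*$. - $H=\mathrm{Hom}_{G_0}(R,V)$, $H^*=\mathrm{Hom}_{G_0}(R^*,V^* )$, and $\varepsilon:(H\otimes R)\oplus(H^*\otimes R^* )\to V\oplus V^*$, $h\otimes r+f\otimes t\mapsto h(r)+f(t)$, which is a $G_0$-equivariant isomorphism. - $H^*$ is paired with $H$ by $f(h)=\sum_i f(\vartheta_i)(h(e_i))$, where $(e_i)$ is a basis of $R$ and $(\vartheta_i)$ is the dual basis. A linear map $M$ respects a bilinear form $F$ in either of two senses: (i) as an isometry, $F(Mw_1,Mw_2)=F(w_1,w_2)$ (for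 invertible $M$); or (ii) infinitesimally, $F(Mw_1,w_2)+F(w_1,Mw_2)=0$. The equivalence holds in each sense. *)

theory Defs
  imports "HOL-Analysis.Analysis" "HOL-Algebra.Group" "Jordan_Normal_Form.Matrix"
begin

(* A compact (Hausdorff) topological group: HOL-Algebra group G with a topology on its carrier *)
definition compact_group :: "('g, 'b) monoid_scheme \<Rightarrow> 'g topology \<Rightarrow> bool" where
  "compact_group G T \<longleftrightarrow> group G \<and> topspace T = carrier G \<and> compact_space T \<and> Hausdorff_space T
     \<and> continuous_map (prod_topology T T) T (\<lambda>(x, y). x \<otimes>\<^bsub>G\<^esub> y)
     \<and> continuous_map T T (\<lambda>x. inv\<^bsub>G\<^esub> x)"

(* conjugate transpose and unitary matrices *)
definition ctrans :: "complex mat \<Rightarrow> complex mat" where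
  "ctrans M = map_mat cnj (transpose_mat M)"

definition unitary_mat :: "nat \<Rightarrow> complex mat \<Rightarrow> bool" where
  "unitary_mat n M \<longleftrightarrow> M \<in> carrier_mat n n \<and> M * ctrans M = 1\<^sub>m n"

(* A continuous unitary representation of (G,T) on C^n, given by matrices
   with respect to an orthonormal basis *)
definition unitary_rep :: "('g, 'b) monoid_scheme \<Rightarrow> 'g topology \<Rightarrow> nat \<Rightarrow> ('g \<Rightarrow> complex mat) \<Rightarrow> bool" where
  "unitary_rep G T n \<rho> \<longleftrightarrow>
     (\<forall>g\<in>carrier G. unitary_mat n (\<rho> g))
     \<and> (\<forall>g\<in>carrier G. \<forall>h\<in>carrier G. \<rho> (g \<otimes>\<^bsub>G\<^esub> h) = \<rho> g * \<rho> h)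
     \<and> \<rho> \<one>\<^bsub>G\<^esub> = 1\<^sub>m n
     \<and> (\<forall>i<n. \<forall>j<n. continuous_map T euclidean (\<lambda>g. \<rho> g $$ (i, j)))"

(* dual representation, in coordinates w.r.t. the dual basis: (g f)(v) = f(g^{-1} v) *)
definition dual_rep :: "('g, 'b) monoid_scheme \<Rightarrow> ('g \<Rightarrow> complex mat) \<Rightarrow> 'g \<Rightarrow> complex mat" where
  "dual_rep G \<rho> g = transpose_mat (\<rho> (inv\<^bsub>G\<^esub> g))"

(* complex subspaces and complex-linear maps *)
definition csubspace_of :: "nat \<Rightarrow> complex vec set \<Rightarrow> bool" where
  "csubspace_of n W \<longleftrightarrow> W \<subseteq> carrier_vec n \<and> 0\<^sub>v n \<in> W
     \<and> (\<forall>x\<in>W. \<forall>y\<in>W. x + y \<in> W) \<and> (\<forall>c. \<forall>x\<in>W. c \<cdot>\<^sub>v x \<in> W)"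

definition invariant_subspace :: "('g, 'b) monoid_scheme \<Rightarrow> nat \<Rightarrow> ('g \<Rightarrow> complex mat) \<Rightarrow> complex vec set \<Rightarrow> bool" where
  "invariant_subspace G n \<rho> W \<longleftrightarrow> csubspace_of n W \<and> (\<forall>g\<in>carrier G. \<forall>w\<in>W. \<rho> g *\<^sub>v w \<in> W)"

(* W is an irreducible subrepresentation of (C^n, rho) *)
definition irreducible_subrep :: "('g, 'b) monoid_scheme \<Rightarrow> nat \<Rightarrow> ('g \<Rightarrow> complex mat) \<Rightarrow> complex vec set \<Rightarrow> bool" where
  "irreducible_subrep G n \<rho> W \<longleftrightarrow> invariant_subspace G n \<rho> W \<and> W \<noteq> {0\<^sub>v n}
     \<and> (\<forall>U. invariant_subspace G n \<rho> U \<and> U \<subseteq> W \<longrightarrow> U = {0\<^sub>v n} \<or> U = W)"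

definition irreducible_rep :: "('g, 'b) monoid_scheme \<Rightarrow> nat \<Rightarrow> ('g \<Rightarrow> complex mat) \<Rightarrow> bool" where
  "irreducible_rep G n \<rho> \<longleftrightarrow> irreducible_subrep G n \<rho> (carrier_vec n)"

(* (C^n, rho) is isomorphic to the subrepresentation W of (C^m, sigma) *)
definition rep_iso_to :: "('g, 'b) monoid_scheme \<Rightarrow> nat \<Rightarrow> ('g \<Rightarrow> complex mat) \<Rightarrow> nat \<Rightarrow> ('g \<Rightarrow> complex mat) \<Rightarrow> complex vec set \<Rightarrow> bool" where
  "rep_iso_to G n \<rho> m \<sigma> W \<longleftrightarrow> (\<exists>\<phi>. bij_betw \<phi> (carrier_vec n) W
     \<and> (\<forall>x\<in>carrier_vec n. \<forall>y\<in>carrier_vec n. \<phi> (x + y) = \<phi> x + \<phi> y)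
     \<and> (\<forall>c. \<forall>x\<in>carrier_vec n. \<phi> (c \<cdot>\<^sub>v x) = c \<cdot>\<^sub>v \<phi> x)
     \<and> (\<forall>g\<in>carrier G. \<forall>x\<in>carrier_vec n. \<phi> (\<rho> g *\<^sub>v x) = \<sigma> g *\<^sub>v \<phi> x))"

(* H = Hom_G(R,V), as m x r matrices *)
definition hom_space :: "('g, 'b) monoid_scheme \<Rightarrow> nat \<Rightarrow> ('g \<Rightarrow> complex mat) \<Rightarrow> nat \<Rightarrow> ('g \<Rightarrow> complex mat) \<Rightarrow> complex mat set" where
  "hom_space G r \<rho> m \<sigma> = {h \<in> carrier_mat m r. \<forall>g\<in>carrier G. h * \<rho> g = \<sigma> g * h}"

(* the pairing H* x H -> C:  f(h) = sum_i f(theta_i)(h(e_i)) *)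
definition hom_pairing :: "nat \<Rightarrow> complex mat \<Rightarrow> complex mat \<Rightarrow> complex" where
  "hom_pairing r f h = (\<Sum>i<r. (f *\<^sub>v unit_vec r i) \<bullet> (h *\<^sub>v unit_vec r i))"

(* canonical symmetric form b on V + V* *)
definition form_b :: "complex vec \<times> complex vec \<Rightarrow> complex vec \<times> complex vec \<Rightarrow> complex" where
  "form_b w1 w2 = snd w1 \<bullet> fst w2 + snd w2 \<bullet> fst w1"

(* canonical symmetric form s on H + H* *)
definition form_s :: "nat \<Rightarrow> complex mat \<times> complex mat \<Rightarrow> complex mat \<times> complex mat \<Rightarrow> complex" where
  "form_s r w1 w2 = hom_pairing r (snd w1) (fst w2) + hom_pairing r (snd w2) (fst w1)"

(* complex linearity of a map on a product of (subspaces), expressed componentwise *)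
definition clinear_on :: "'a set \<Rightarrow> ('a \<Rightarrow> 'b) \<Rightarrow> ('a \<Rightarrow> 'a \<Rightarrow> 'a) \<Rightarrow> (complex \<Rightarrow> 'a \<Rightarrow> 'a)
     \<Rightarrow> ('b \<Rightarrow> 'b \<Rightarrow> 'b) \<Rightarrow> (complex \<Rightarrow> 'b \<Rightarrow> 'b) \<Rightarrow> bool" where
  "clinear_on S f pl sm pl' sm' \<longleftrightarrow> (\<forall>x\<in>S. \<forall>y\<in>S. f (pl x y) = pl' (f x) (f y))
     \<and> (\<forall>c. \<forall>x\<in>S. f (sm c x) = sm' c (f x))"

definition vpair_add :: "complex vec \<times> complex vec \<Rightarrow> complex vec \<times> complex vec \<Rightarrow> complex vec \<times> complex vec" where
  "vpair_add x y = (fst x + fst y, snd x + snd y)"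
definition vpair_smult :: "complex \<Rightarrow> complex vec \<times> complex vec \<Rightarrow> complex vec \<times> complex vec" where
  "vpair_smult c x = (c \<cdot>\<^sub>v fst x, c \<cdot>\<^sub>v snd x)"

(* respecting a bilinear form F on S: (i) as an invertible isometry, (ii) infinitesimally *)
definition respects_isometry :: "'a set \<Rightarrow> ('a \<Rightarrow> 'a \<Rightarrow> complex) \<Rightarrow> ('a \<Rightarrow> 'a) \<Rightarrow> bool" where
  "respects_isometry S F M \<longleftrightarrow> bij_betw M S S \<and> (\<forall>w1\<in>S. \<forall>w2\<in>S. F (M w1) (M w2) = F w1 w2)"

definition respects_infinitesimally :: "'a set \<Rightarrow> ('a \<Rightarrow> 'a \<Rightarrow> complex) \<Rightarrow> ('a \<Rightarrow> 'a) \<Rightarrow> bool" where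
  "respects_infinitesimally S F M \<longleftrightarrow> (\<forall>w1\<in>S. \<forall>w2\<in>S. F (M w1) w2 + F w1 (M w2) = 0)"

end

theory Submission
  imports Defs "Jordan_Normal_Form.Gram_Schmidt" "Jordan_Normal_Form.Spectral_Radius" "Jordan_Normal_Form.DL_Rank"
begin

unbundle no vec_syntax
no_notation inner (infix "\<bullet>" 70)



section \<open>Basic facts\<close>

lemma conj_mat_vec:
  assumes "M \<in> carrier_mat n k" "x \<in> carrier_vec k"
  shows "map_mat cnj M *\<^sub>v conjugate x = conjugate (M *\<^sub>v x)"
proof (rule eq_vecI)
  fix i assume i: "i < dim_vec (conjugate (M *\<^sub>v x))"
  hence i': "i < n" using assms by simp
  have "(map_mat cnj M *\<^sub>v conjugate x) $ i = (\<Sum>j<k. cnj (M $$ (i,j)) * cnj (x $ j))"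
    using assms i' by (simp add: mult_mat_vec_def scalar_prod_def row_def lessThan_atLeast0)
  also have "\<dots> = cnj (\<Sum>j<k. M $$ (i,j) * x $ j)" by simp
  also have "\<dots> = conjugate (M *\<^sub>v x) $ i"
    using assms i' by (simp add: mult_mat_vec_def scalar_prod_def row_def lessThan_atLeast0)
  finally show "(map_mat cnj M *\<^sub>v conjugate x) $ i = conjugate (M *\<^sub>v x) $ i" .
qed (use assms in simp)

lemma conj_conj_vec[simp]: "conjugate (conjugate (x :: complex vec)) = x"
  by simp

lemma conj_mat_mat[simp]: "map_mat cnj (map_mat cnj (M :: complex mat)) = M"
  by (rule eq_matI) auto

lemma unitary_inv:
  assumes grp: "group G" and U: "unitary_rep G T n \<rho>" and g: "g \<in> carrier G"
  shows "\<rho> (inv\<^bsub>G\<^esub> g) = ctrans (\<rho> g)"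
proof -
  have ig: "inv\<^bsub>G\<^esub> g \<in> carrier G" using grp g by (simp add: group.inv_closed)
  have u: "\<rho> g \<in> carrier_mat n n" "\<rho> g * ctrans (\<rho> g) = 1\<^sub>m n"
    using U g unfolding unitary_rep_def unitary_mat_def by auto
  have u2: "\<rho> (inv\<^bsub>G\<^esub> g) \<in> carrier_mat n n"
    using U ig unfolding unitary_rep_def unitary_mat_def by auto
  have c: "ctrans (\<rho> g) \<in> carrier_mat n n" using u unfolding ctrans_def by auto
  have li: "ctrans (\<rho> g) * \<rho> g = 1\<^sub>m n"
    using mat_mult_left_right_inverse[OF u(1) c u(2)] .
  have "\<rho> g * \<rho> (inv\<^bsub>G\<^esub> g) = 1\<^sub>m n"
    using U g ig grp unfolding unitary_rep_def
    by (metis group.r_inv)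
  hence "ctrans (\<rho> g) * (\<rho> g * \<rho> (inv\<^bsub>G\<^esub> g)) = ctrans (\<rho> g)"
    using c by simp
  hence "(ctrans (\<rho> g) * \<rho> g) * \<rho> (inv\<^bsub>G\<^esub> g) = ctrans (\<rho> g)"
    using c u u2 by (simp add: assoc_mult_mat[of _ n n _ n _ n])
  thus ?thesis using li u2 by simp
qed

lemma dual_rep_conj:
  assumes grp: "group G" and U: "unitary_rep G T n \<rho>" and g: "g \<in> carrier G"
  shows "dual_rep G \<rho> g = map_mat cnj (\<rho> g)"
  unfolding dual_rep_def unitary_inv[OF assms] ctrans_def
  by (rule eq_matI) auto

lemma rep_carrier:
  assumes U: "unitary_rep G T n \<rho>" and g: "g \<in> carrier G"
  shows "\<rho> g \<in> carrier_mat n n"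
  using U g unfolding unitary_rep_def unitary_mat_def by auto

lemma dual_carrier:
  assumes grp: "group G" and U: "unitary_rep G T n \<rho>" and g: "g \<in> carrier G"
  shows "dual_rep G \<rho> g \<in> carrier_mat n n"
  using dual_rep_conj[OF assms] rep_carrier[OF U g] by simp

lemma csub_carrier: "csubspace_of n (carrier_vec n)"
  unfolding csubspace_of_def by auto

lemma csub_conj:
  assumes "csubspace_of n U"
  shows "csubspace_of n (conjugate ` U)"
proof -
  have sub: "U \<subseteq> carrier_vec n" and z: "0\<^sub>v n \<in> U" and ad: "\<forall>x\<in>U. \<forall>y\<in>U. x + y \<in> U"
    and sm: "\<forall>c. \<forall>x\<in>U. c \<cdot>\<^sub>v x \<in> U"
    using assms unfolding csubspace_of_def by auto
  have "conjugate ` U \<subseteq> carrier_vec n" using sub by auto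
  moreover have "0\<^sub>v n \<in> conjugate ` U"
    using z by (metis conjugate_zero_vec image_eqI)
  moreover have "\<forall>x\<in>conjugate ` U. \<forall>y\<in>conjugate ` U. x + y \<in> conjugate ` U"
  proof (intro ballI)
    fix x y assume "x \<in> conjugate ` U" "y \<in> conjugate ` U"
    then obtain a b where ab: "a \<in> U" "b \<in> U" "x = conjugate a" "y = conjugate b" by auto
    have "x + y = conjugate (a + b)" using ab sub by (simp add: conjugate_add_vec[of _ n] subsetD)
    thus "x + y \<in> conjugate ` U" using ab ad by auto
  qed
  moreover have "\<forall>c. \<forall>x\<in>conjugate ` U. c \<cdot>\<^sub>v x \<in> conjugate ` U"
  proof (intro allI ballI)
    fix c x assume "x \<in> conjugate ` U"
    then obtain a where a: "a \<in> U" "x = conjugate a" by auto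
    have "c \<cdot>\<^sub>v x = conjugate (cnj c \<cdot>\<^sub>v a)" using a by (simp add: conjugate_smult_vec)
    thus "c \<cdot>\<^sub>v x \<in> conjugate ` U" using a sm by auto
  qed
  ultimately show ?thesis unfolding csubspace_of_def by auto
qed

lemma conj_image_conj[simp]: "conjugate ` conjugate ` (U :: complex vec set) = U"
  by (simp add: image_comp)

lemma conj_image_carrier[simp]: "conjugate ` carrier_vec n = (carrier_vec n :: complex vec set)"
proof -
  have "carrier_vec n \<subseteq> conjugate ` (carrier_vec n :: complex vec set)"
    by (metis carrier_vec_conjugate conj_conj_vec image_eqI subsetI)
  thus ?thesis by auto
qed

lemma conj_image_zero[simp]: "conjugate ` {0\<^sub>v n} = {0\<^sub>v n :: complex vec}"
  by simp

lemma conj_image_eq_iff: "(conjugate ` U = conjugate ` W) \<longleftrightarrow> (U = (W :: complex vec set))"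
  by (metis conj_image_conj)

lemma inv_conj:
  assumes tt: "\<forall>g\<in>carrier G. \<tau>' g = map_mat cnj (\<tau> g)"
    and tc: "\<forall>g\<in>carrier G. \<tau> g \<in> carrier_mat n n"
    and inv: "invariant_subspace G n \<tau> U"
  shows "invariant_subspace G n \<tau>' (conjugate ` U)"
proof -
  have cs: "csubspace_of n U" and iv: "\<forall>g\<in>carrier G. \<forall>w\<in>U. \<tau> g *\<^sub>v w \<in> U"
    using inv unfolding invariant_subspace_def by auto
  have sub: "U \<subseteq> carrier_vec n" using cs unfolding csubspace_of_def by auto
  have "\<forall>g\<in>carrier G. \<forall>w\<in>conjugate ` U. \<tau>' g *\<^sub>v w \<in> conjugate ` U"
  proof (intro ballI)
    fix g w assume g: "g \<in> carrier G" and "w \<in> conjugate ` U"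
    then obtain u where u: "u \<in> U" "w = conjugate u" by auto
    have "\<tau>' g *\<^sub>v w = conjugate (\<tau> g *\<^sub>v u)"
      using tt g u conj_mat_vec[of "\<tau> g" n n u] tc sub by auto
    thus "\<tau>' g *\<^sub>v w \<in> conjugate ` U" using iv g u by auto
  qed
  thus ?thesis using csub_conj[OF cs] unfolding invariant_subspace_def by auto
qed

lemma irr_conj:
  assumes tt: "\<forall>g\<in>carrier G. \<tau>' g = map_mat cnj (\<tau> g)"
    and tc: "\<forall>g\<in>carrier G. \<tau> g \<in> carrier_mat n n"
    and irr: "irreducible_rep G n \<tau>"
  shows "irreducible_rep G n \<tau>'"
proof -
  have tt': "\<forall>g\<in>carrier G. \<tau> g = map_mat cnj (\<tau>' g)" using tt by simp
  have tc': "\<forall>g\<in>carrier G. \<tau>' g \<in> carrier_mat n n" using tt tc by simp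
  have i1: "invariant_subspace G n \<tau>' (carrier_vec n)"
    using tc' csub_carrier unfolding invariant_subspace_def by auto
  have ne: "carrier_vec n \<noteq> {0\<^sub>v n :: complex vec}"
    using irr unfolding irreducible_rep_def irreducible_subrep_def by auto
  have "\<forall>U. invariant_subspace G n \<tau>' U \<and> U \<subseteq> carrier_vec n \<longrightarrow> U = {0\<^sub>v n} \<or> U = carrier_vec n"
  proof (intro allI impI)
    fix U assume U: "invariant_subspace G n \<tau>' U \<and> U \<subseteq> carrier_vec n"
    have "invariant_subspace G n \<tau> (conjugate ` U)" using inv_conj[OF tt' tc'] U by auto
    moreover have "conjugate ` U \<subseteq> carrier_vec n" using U by auto
    ultimately have "conjugate ` U = {0\<^sub>v n} \<or> conjugate ` U = carrier_vec n"
      using irr unfolding irreducible_rep_def irreducible_subrep_def by auto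
    thus "U = {0\<^sub>v n} \<or> U = carrier_vec n"
      by (metis conj_image_eq_iff conj_image_zero conj_image_carrier)
  qed
  thus ?thesis using i1 ne unfolding irreducible_rep_def irreducible_subrep_def by auto
qed

section \<open>Matrices of linear maps\<close>

lemma mat_vec_zero[simp]: "M \<in> carrier_mat m r \<Longrightarrow> M *\<^sub>v 0\<^sub>v r = 0\<^sub>v m"
  by (rule eq_vecI) auto

lemma lin_map_mat:
  fixes f :: "complex vec \<Rightarrow> complex vec"
  assumes fc: "\<forall>x\<in>carrier_vec r. f x \<in> carrier_vec m"
    and fa: "\<forall>x\<in>carrier_vec r. \<forall>y\<in>carrier_vec r. f (x + y) = f x + f y"
    and fs: "\<forall>c. \<forall>x\<in>carrier_vec r. f (c \<cdot>\<^sub>v x) = c \<cdot>\<^sub>v f x"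
  shows "\<exists>M \<in> carrier_mat m r. \<forall>x\<in>carrier_vec r. f x = M *\<^sub>v x"
proof -
  define M where "M = mat m r (\<lambda>(i,j). f (unit_vec r j) $ i)"
  have M: "M \<in> carrier_mat m r" unfolding M_def by simp
  have Mu: "M *\<^sub>v unit_vec r k = f (unit_vec r k)" if k: "k < r" for k
  proof (rule eq_vecI)
    have fk: "f (unit_vec r k) \<in> carrier_vec m" using fc by simp
    show "dim_vec (M *\<^sub>v unit_vec r k) = dim_vec (f (unit_vec r k))"
      using M fk by (simp add: carrier_vecD)
    fix i assume "i < dim_vec (f (unit_vec r k))"
    hence i: "i < m" using fk by (simp add: carrier_vecD)
    have "(M *\<^sub>v unit_vec r k) $ i = row M i \<bullet> unit_vec r k" using i M by simp
    also have "\<dots> = row M i $ k" using k M by (simp add: scalar_prod_right_unit)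
    also have "\<dots> = f (unit_vec r k) $ i" using k i unfolding M_def by simp
    finally show "(M *\<^sub>v unit_vec r k) $ i = f (unit_vec r k) $ i" .
  qed
  have main: "f (vec r (\<lambda>j. if j < k then x $ j else 0)) = M *\<^sub>v vec r (\<lambda>j. if j < k then x $ j else 0)"
    if x: "x \<in> carrier_vec r" and k: "k \<le> r" for x k
    using k
  proof (induction k)
    case 0
    have z: "vec r (\<lambda>j. if j < 0 then x $ j else 0) = 0\<^sub>v r" by auto
    have "f (0\<^sub>v r) = f (0 \<cdot>\<^sub>v 0\<^sub>v r)" by (rule arg_cong[of _ _ f], rule eq_vecI, auto)
    also have "\<dots> = 0 \<cdot>\<^sub>v f (0\<^sub>v r)" using fs by simp
    also have "\<dots> = 0\<^sub>v m"
    proof -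
      have "f (0\<^sub>v r) \<in> carrier_vec m" using fc by simp
      thus ?thesis by (intro eq_vecI) auto
    qed
    finally show ?case using z M by simp
  next
    case (Suc k)
    have k: "k < r" using Suc by simp
    let ?p = "vec r (\<lambda>j. if j < k then x $ j else 0)"
    have eq: "vec r (\<lambda>j. if j < Suc k then x $ j else 0) = ?p + x $ k \<cdot>\<^sub>v unit_vec r k"
      by (rule eq_vecI) (auto simp: unit_vec_def less_Suc_eq)
    have "f (?p + x $ k \<cdot>\<^sub>v unit_vec r k) = f ?p + x $ k \<cdot>\<^sub>v f (unit_vec r k)"
      using fa fs k by simp
    also have "\<dots> = M *\<^sub>v ?p + x $ k \<cdot>\<^sub>v (M *\<^sub>v unit_vec r k)"
      using Suc Mu k by simp
    also have "\<dots> = M *\<^sub>v (?p + x $ k \<cdot>\<^sub>v unit_vec r k)"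
      using M k by (simp add: mult_add_distrib_mat_vec mult_mat_vec)
    finally show ?case using eq by simp
  qed
  have "\<forall>x\<in>carrier_vec r. f x = M *\<^sub>v x"
  proof
    fix x :: "complex vec" assume x: "x \<in> carrier_vec r"
    have "vec r (\<lambda>j. if j < r then x $ j else 0) = x" using x by (auto simp: carrier_vecD)
    thus "f x = M *\<^sub>v x" using main[OF x, of r] by simp
  qed
  thus ?thesis using M by auto
qed


section \<open>Dimension-like measure\<close>

definition li_m :: "nat \<Rightarrow> complex vec set \<Rightarrow> bool" where
  "li_m m S \<longleftrightarrow> S \<subseteq> carrier_vec m \<and> \<not> module.lin_dep class_ring (module_vec TYPE(complex) m) S"

definition mu :: "nat \<Rightarrow> complex vec set \<Rightarrow> nat" where
  "mu m U = Max (card ` {S. S \<subseteq> U \<and> li_m m S})"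

lemma li_bound:
  assumes "li_m m S" shows "finite S \<and> card S \<le> m"
proof -
  interpret V: vec_space "TYPE(complex)" m .
  have "S \<subseteq> carrier_vec m" "\<not> V.lin_dep S" using assms unfolding li_m_def by auto
  thus ?thesis using V.li_le_dim[OF V.fin_dim] V.dim_is_n by auto
qed

lemma li_empty: "li_m m {}"
proof -
  interpret V: vec_space "TYPE(complex)" m .
  show ?thesis unfolding li_m_def V.lin_dep_def by auto
qed

lemma mu_facts:
  assumes "U \<subseteq> carrier_vec m"
  shows "\<exists>S. S \<subseteq> U \<and> li_m m S \<and> finite S \<and> card S = mu m U"
    and "\<And>S. S \<subseteq> U \<Longrightarrow> li_m m S \<Longrightarrow> card S \<le> mu m U"
proof -
  let ?C = "card ` {S. S \<subseteq> U \<and> li_m m S}"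
  have fin: "finite ?C"
    by (rule finite_subset[of _ "{..m}"]) (auto dest: li_bound)
  have ne: "?C \<noteq> {}" using li_empty by auto
  have "mu m U \<in> ?C" unfolding mu_def using Max_in[OF fin ne] .
  thus "\<exists>S. S \<subseteq> U \<and> li_m m S \<and> finite S \<and> card S = mu m U"
    using li_bound by auto
  show "\<And>S. S \<subseteq> U \<Longrightarrow> li_m m S \<Longrightarrow> card S \<le> mu m U"
    unfolding mu_def using fin by (intro Max_ge) auto
qed

lemma csub_submodule:
  assumes "csubspace_of m U"
  shows "LinearCombinations.submodule class_ring U (module_vec TYPE(complex) m)"
proof -
  interpret V: vec_space "TYPE(complex)" m .
  have sub: "U \<subseteq> carrier_vec m" and z: "0\<^sub>v m \<in> U" and ad: "\<forall>x\<in>U. \<forall>y\<in>U. x + y \<in> U"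
    and sm: "\<forall>c. \<forall>x\<in>U. c \<cdot>\<^sub>v x \<in> U"
    using assms unfolding csubspace_of_def by auto
  show ?thesis
    by (rule LinearCombinations.submodule.intro) (use V.module_axioms sub z ad sm in auto)
qed

lemma mu_strict:
  assumes U: "csubspace_of m U" and U': "csubspace_of m U'" and sub: "U' \<subseteq> U" and ne: "U' \<noteq> U"
  shows "mu m U' < mu m U"
proof -
  interpret V: vec_space "TYPE(complex)" m .
  have Uc: "U \<subseteq> carrier_vec m" and U'c: "U' \<subseteq> carrier_vec m"
    using U U' unfolding csubspace_of_def by auto
  obtain S where S: "S \<subseteq> U'" "li_m m S" "finite S" "card S = mu m U'"
    using mu_facts(1)[OF U'c] by blast
  obtain u where u: "u \<in> U" "u \<notin> U'" using sub ne by auto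
  have "V.span S \<subseteq> U'"
    using V.span_is_subset[OF S(1) csub_submodule[OF U']] .
  hence us: "u \<notin> V.span S" using u by auto
  have uS: "u \<notin> S" using u S by auto
  have Sc: "S \<subseteq> carrier_vec m" "\<not> V.lin_dep S" using S unfolding li_m_def by auto
  have "\<not> V.lin_dep (S \<union> {u})"
    using V.lin_dep_iff_in_span[of S u] Sc us uS u Uc by auto
  hence li: "li_m m (insert u S)" using Sc u Uc unfolding li_m_def by auto
  have "card (insert u S) \<le> mu m U"
    using mu_facts(2)[OF Uc _ li] S u sub by auto
  thus ?thesis using S uS by simp
qed

lemma exists_irred:
  assumes inv: "invariant_subspace G m \<sigma> U" and ne: "U \<noteq> {0\<^sub>v m}"
  shows "\<exists>W \<subseteq> U. irreducible_subrep G m \<sigma> W"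
proof -
  let ?P = "\<lambda>W. invariant_subspace G m \<sigma> W \<and> W \<noteq> {0\<^sub>v m} \<and> W \<subseteq> U"
  have "?P U" using assms by auto
  then obtain W where W: "?P W" and min: "\<And>W'. ?P W' \<Longrightarrow> mu m W \<le> mu m W'"
    using ex_has_least_nat[of ?P U "mu m"] by blast
  have "irreducible_subrep G m \<sigma> W"
    unfolding irreducible_subrep_def
  proof (intro conjI allI impI)
    show "invariant_subspace G m \<sigma> W" "W \<noteq> {0\<^sub>v m}" using W by auto
    fix U' assume U': "invariant_subspace G m \<sigma> U' \<and> U' \<subseteq> W"
    show "U' = {0\<^sub>v m} \<or> U' = W"
    proof (rule ccontr)
      assume c: "\<not> (U' = {0\<^sub>v m} \<or> U' = W)"
      hence "?P U'" using U' W by auto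
      hence "mu m W \<le> mu m U'" by (rule min)
      moreover have "mu m U' < mu m W"
        using mu_strict[of m W U'] U' W c unfolding invariant_subspace_def by auto
      ultimately show False by simp
    qed
  qed
  thus ?thesis using W by auto
qed

lemma orth_exists:
  assumes U: "csubspace_of m U" and ne: "U \<noteq> carrier_vec m"
  shows "\<exists>w \<in> carrier_vec m. w \<noteq> 0\<^sub>v m \<and> (\<forall>u\<in>U. u \<bullet>c w = 0)"
proof -
  interpret V: cof_vec_space m "TYPE(complex)" .
  have Uc: "U \<subseteq> carrier_vec m" using U unfolding csubspace_of_def by auto
  obtain S where S: "S \<subseteq> U" "li_m m S" "finite S" "card S = mu m U"
    using mu_facts(1)[OF Uc] by blast
  have Sc: "S \<subseteq> carrier_vec m" "\<not> V.lin_dep S" using S unfolding li_m_def by auto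
  have spU: "V.span S \<subseteq> U"
    using V.span_is_subset[OF S(1) csub_submodule[OF U]] .
  have Usp: "U \<subseteq> V.span S"
  proof
    fix v assume v: "v \<in> U"
    show "v \<in> V.span S"
    proof (rule ccontr)
      assume vs: "v \<notin> V.span S"
      have vS: "v \<notin> S" using vs V.in_own_span[OF Sc(1)] by auto
      have "\<not> V.lin_dep (S \<union> {v})"
        using V.lin_dep_iff_in_span[of S v] Sc vs vS v Uc by auto
      hence li: "li_m m (insert v S)" using Sc v Uc unfolding li_m_def by auto
      have "card (insert v S) \<le> mu m U"
        using mu_facts(2)[OF Uc _ li] S v by auto
      thus False using S vS by simp
    qed
  qed
  obtain ws where ws: "set ws = S" "distinct ws" using finite_distinct_list[OF S(3)] by blast
  define us where "us = gram_schmidt m ws"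
  have gs: "V.span (set ws) = V.span (set us)" "corthogonal us" "set us \<subseteq> carrier_vec m" "distinct us"
    using V.gram_schmidt_result[OF _ ws(2) _ us_def] Sc ws by auto
  have spanus: "V.span (set us) = U" using spU Usp gs(1) ws(1) by auto
  obtain x where x: "x \<in> carrier_vec m" "x \<notin> U" using ne Uc by auto
  have xs: "x \<notin> V.span (set us)" using x spanus by auto
  define w where "w = adjuster m x us + x"
  have wc: "w \<in> carrier_vec m" unfolding w_def using V.adjuster_carrier[OF x(1) gs(3) gs(4)] x by auto
  have wnz: "w \<noteq> 0\<^sub>v m" unfolding w_def using V.adjust_nonzero[OF gs(3) gs(4) x(1) xs] .
  have wz: "w \<bullet>c us ! i = 0" if "i < length us" for i
    unfolding w_def using V.adjust_zero[OF gs(3) gs(2) x(1) that] .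
  have "conjugate w \<in> V.orthogonal_complement (set us)"
    unfolding V.orthogonal_complement_def
  proof (intro CollectI conjI ballI)
    show "conjugate w \<in> carrier_vec m" using wc by simp
    fix y assume y: "y \<in> set us"
    then obtain i where i: "i < length us" "y = us ! i" by (auto simp: in_set_conv_nth)
    have yc: "y \<in> carrier_vec m" using y gs(3) by auto
    have "conjugate w \<bullet> y = conjugate (w \<bullet>c y)"
      using conjugate_sprod_vec[of w m "conjugate y"] wc yc by simp
    thus "conjugate w \<bullet> y = 0" using wz[OF i(1)] i(2) by simp
  qed
  hence "conjugate w \<in> V.orthogonal_complement U"
    using V.in_orthogonal_complement_span[OF gs(3)] spanus by simp
  hence "\<forall>u\<in>U. u \<bullet>c w = 0"
    unfolding V.orthogonal_complement_def
    using Uc wc by (auto simp: comm_scalar_prod[of _ m] subsetD)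
  thus ?thesis using wc wnz by auto
qed



section \<open>Vector helpers\<close>

lemma mat_unit_index:
  fixes A :: "complex mat"
  assumes "A \<in> carrier_mat m r" "i < m" "j < r"
  shows "(A *\<^sub>v unit_vec r j) $ i = A $$ (i, j)"
  using assms by simp

lemma mat_eq_vecI:
  fixes A B :: "complex mat"
  assumes A: "A \<in> carrier_mat m r" and B: "B \<in> carrier_mat m r"
    and eq: "\<And>x. x \<in> carrier_vec r \<Longrightarrow> A *\<^sub>v x = B *\<^sub>v x"
  shows "A = B"
proof (rule eq_matI)
  fix i j assume "i < dim_row B" "j < dim_col B"
  hence ij: "i < m" "j < r" using B by auto
  have "A $$ (i, j) = (A *\<^sub>v unit_vec r j) $ i" using mat_unit_index[OF A ij] by simp
  also have "\<dots> = (B *\<^sub>v unit_vec r j) $ i" using eq[of "unit_vec r j"] by simp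
  also have "\<dots> = B $$ (i, j)" using mat_unit_index[OF B ij] .
  finally show "A $$ (i, j) = B $$ (i, j)" .
qed (use A B in auto)

lemma vec_sub_self: "(a :: complex vec) \<in> carrier_vec n \<Longrightarrow> a + (-1) \<cdot>\<^sub>v a = 0\<^sub>v n"
  by (rule eq_vecI) auto

lemma vec_sub_zero:
  assumes "x \<in> carrier_vec n" "y \<in> carrier_vec n" "x + (-1 :: complex) \<cdot>\<^sub>v y = 0\<^sub>v n"
  shows "x = y"
proof (rule eq_vecI)
  fix i assume i: "i < dim_vec y"
  have iy: "i < n" using i assms(2) by simp
  have "(x + (-1 :: complex) \<cdot>\<^sub>v y) $ i = (0\<^sub>v n :: complex vec) $ i" using assms(3) by simp
  hence a: "(x + (-1 :: complex) \<cdot>\<^sub>v y) $ i = 0" using iy by simp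
  have b: "(x + (-1 :: complex) \<cdot>\<^sub>v y) $ i = x $ i + (-1) * y $ i" using iy assms(1,2) by simp
  from a b show "x $ i = y $ i" by simp
qed (use assms in simp)

lemma conj_mat_vec2:
  assumes "M \<in> carrier_mat n k" "x \<in> carrier_vec k"
  shows "map_mat cnj M *\<^sub>v x = conjugate (M *\<^sub>v conjugate x)"
  using conj_mat_vec[OF assms(1), of "conjugate x"] assms(2) by simp

section \<open>The setting\<close>

locale setting =
  fixes G :: "('g, 'b) monoid_scheme" and T :: "'g topology"
    and r :: nat and \<rho> :: "'g \<Rightarrow> complex mat"
    and m :: nat and \<sigma> :: "'g \<Rightarrow> complex mat"
  assumes grp: "group G"
    and R_rep: "unitary_rep G T r \<rho>" and R_irr: "irreducible_rep G r \<rho>"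
    and V_rep: "unitary_rep G T m \<sigma>"
    and V_isotypic: "\<forall>W. irreducible_subrep G m \<sigma> W \<longrightarrow> rep_iso_to G r \<rho> m \<sigma> W"
    and R_not_self_dual: "\<not> rep_iso_to G r \<rho> r (dual_rep G \<rho>) (carrier_vec r)"
begin

abbreviation "HH \<equiv> hom_space G r \<rho> m \<sigma>"
abbreviation "HD \<equiv> hom_space G r (dual_rep G \<rho>) m (dual_rep G \<sigma>)"

lemma rho_c: "g \<in> carrier G \<Longrightarrow> \<rho> g \<in> carrier_mat r r"
  using rep_carrier[OF R_rep] .
lemma sigma_c: "g \<in> carrier G \<Longrightarrow> \<sigma> g \<in> carrier_mat m m"
  using rep_carrier[OF V_rep] .
lemma rhod: "g \<in> carrier G \<Longrightarrow> dual_rep G \<rho> g = map_mat cnj (\<rho> g)"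
  using dual_rep_conj[OF grp R_rep] .
lemma sigmad: "g \<in> carrier G \<Longrightarrow> dual_rep G \<sigma> g = map_mat cnj (\<sigma> g)"
  using dual_rep_conj[OF grp V_rep] .
lemma rhod_c: "g \<in> carrier G \<Longrightarrow> dual_rep G \<rho> g \<in> carrier_mat r r"
  using rhod rho_c by simp
lemma sigmad_c: "g \<in> carrier G \<Longrightarrow> dual_rep G \<sigma> g \<in> carrier_mat m m"
  using sigmad sigma_c by simp
lemma sigma_mult: "g \<in> carrier G \<Longrightarrow> h \<in> carrier G \<Longrightarrow> \<sigma> (g \<otimes>\<^bsub>G\<^esub> h) = \<sigma> g * \<sigma> h"
  using V_rep unfolding unitary_rep_def by auto
lemma sigma_one: "\<sigma> \<one>\<^bsub>G\<^esub> = 1\<^sub>m m"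
  using V_rep unfolding unitary_rep_def by auto
lemma sigma_inv: "g \<in> carrier G \<Longrightarrow> \<sigma> (inv\<^bsub>G\<^esub> g) = ctrans (\<sigma> g)"
  using unitary_inv[OF grp V_rep] .
lemma inv_c: "g \<in> carrier G \<Longrightarrow> inv\<^bsub>G\<^esub> g \<in> carrier G"
  using grp by (simp add: group.inv_closed)

lemma r_pos: "0 < r"
proof (rule ccontr)
  assume "\<not> 0 < r"
  hence r0: "r = 0" by simp
  have ne: "carrier_vec r \<noteq> {0\<^sub>v r :: complex vec}"
    using R_irr unfolding irreducible_rep_def irreducible_subrep_def by auto
  have z: "0\<^sub>v r \<in> (carrier_vec r :: complex vec set)" by simp
  obtain v :: "complex vec" where v: "v \<in> carrier_vec r" "v \<noteq> 0\<^sub>v r" using ne z by blast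
  have "v = 0\<^sub>v r" using v(1) r0 by (intro eq_vecI) auto
  thus False using v(2) by simp
qed

lemma HH_c: "h \<in> HH \<Longrightarrow> h \<in> carrier_mat m r"
  unfolding hom_space_def by auto
lemma HD_c: "h \<in> HD \<Longrightarrow> h \<in> carrier_mat m r"
  unfolding hom_space_def by auto
lemma HH_eq: "h \<in> HH \<Longrightarrow> g \<in> carrier G \<Longrightarrow> h * \<rho> g = \<sigma> g * h"
  unfolding hom_space_def by auto
lemma HD_eq: "h \<in> HD \<Longrightarrow> g \<in> carrier G \<Longrightarrow> h * dual_rep G \<rho> g = dual_rep G \<sigma> g * h"
  unfolding hom_space_def by auto

lemma HH_vec: "h \<in> HH \<Longrightarrow> g \<in> carrier G \<Longrightarrow> x \<in> carrier_vec r \<Longrightarrow> h *\<^sub>v (\<rho> g *\<^sub>v x) = \<sigma> g *\<^sub>v (h *\<^sub>v x)"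
proof -
  assume h: "h \<in> HH" and g: "g \<in> carrier G" and x: "x \<in> carrier_vec r"
  have "h *\<^sub>v (\<rho> g *\<^sub>v x) = (h * \<rho> g) *\<^sub>v x"
    using HH_c[OF h] rho_c[OF g] x by simp
  also have "\<dots> = (\<sigma> g * h) *\<^sub>v x" using HH_eq[OF h g] by simp
  also have "\<dots> = \<sigma> g *\<^sub>v (h *\<^sub>v x)" using HH_c[OF h] sigma_c[OF g] x by simp
  finally show ?thesis .
qed

lemma zero_HH: "0\<^sub>m m r \<in> HH"
  unfolding hom_space_def
proof (intro CollectI conjI ballI)
  fix g assume g: "g \<in> carrier G"
  show "0\<^sub>m m r * \<rho> g = \<sigma> g * 0\<^sub>m m r"
    using left_mult_zero_mat[OF rho_c[OF g], of m] right_mult_zero_mat[OF sigma_c[OF g], of r] by simp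
qed simp
lemma zero_HD: "0\<^sub>m m r \<in> HD"
  unfolding hom_space_def
proof (intro CollectI conjI ballI)
  fix g assume g: "g \<in> carrier G"
  show "0\<^sub>m m r * dual_rep G \<rho> g = dual_rep G \<sigma> g * 0\<^sub>m m r"
    using left_mult_zero_mat[OF rhod_c[OF g], of m] right_mult_zero_mat[OF sigmad_c[OF g], of r] by simp
qed simp

lemma conj_HH: "h \<in> HH \<Longrightarrow> map_mat cnj h \<in> HD"
proof -
  assume h: "h \<in> HH"
  have hc: "h \<in> carrier_mat m r" using HH_c[OF h] .
  have "map_mat cnj h * dual_rep G \<rho> g = dual_rep G \<sigma> g * map_mat cnj h" if g: "g \<in> carrier G" for g
  proof (rule mat_eq_vecI[of _ m r])
    show "map_mat cnj h * dual_rep G \<rho> g \<in> carrier_mat m r" using hc rhod_c[OF g] by simp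
    show "dual_rep G \<sigma> g * map_mat cnj h \<in> carrier_mat m r" using hc sigmad_c[OF g] by simp
    fix x :: "complex vec" assume x: "x \<in> carrier_vec r"
    have "(map_mat cnj h * dual_rep G \<rho> g) *\<^sub>v x = map_mat cnj h *\<^sub>v (map_mat cnj (\<rho> g) *\<^sub>v x)"
      using hc rho_c[OF g] x rhod[OF g] by (simp add: assoc_mult_mat_vec[of _ m r _ r])
    also have "\<dots> = conjugate (h *\<^sub>v (\<rho> g *\<^sub>v conjugate x))"
      using hc rho_c[OF g] x by (simp add: conj_mat_vec2[of _ r r] conj_mat_vec2[of _ m r])
    also have "\<dots> = conjugate (\<sigma> g *\<^sub>v (h *\<^sub>v conjugate x))"
      using HH_vec[OF h g, of "conjugate x"] x by simp
    also have "\<dots> = map_mat cnj (\<sigma> g) *\<^sub>v (map_mat cnj h *\<^sub>v x)"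
      using hc sigma_c[OF g] x by (simp add: conj_mat_vec2[of _ m m] conj_mat_vec2[of _ m r])
    also have "\<dots> = (dual_rep G \<sigma> g * map_mat cnj h) *\<^sub>v x"
      using hc sigma_c[OF g] x sigmad[OF g] by (simp add: assoc_mult_mat_vec[of _ m m _ r])
    finally show "(map_mat cnj h * dual_rep G \<rho> g) *\<^sub>v x = (dual_rep G \<sigma> g * map_mat cnj h) *\<^sub>v x" .
  qed
  thus ?thesis unfolding hom_space_def using hc by auto
qed

lemma KER:
  assumes inv: "invariant_subspace G m \<sigma> K" and ne: "K \<noteq> {0\<^sub>v m}"
  shows "\<exists>h\<in>HH. (\<exists>x\<in>carrier_vec r. h *\<^sub>v x \<noteq> 0\<^sub>v m) \<and> (\<forall>x\<in>carrier_vec r. h *\<^sub>v x \<in> K)"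
proof -
  obtain W where W: "W \<subseteq> K" "irreducible_subrep G m \<sigma> W" using exists_irred[OF inv ne] by blast
  have Wc: "W \<subseteq> carrier_vec m" and Wne: "W \<noteq> {0\<^sub>v m}" and W0: "0\<^sub>v m \<in> W"
    using W(2) unfolding irreducible_subrep_def invariant_subspace_def csubspace_of_def by auto
  obtain \<phi> where bij: "bij_betw \<phi> (carrier_vec r) W"
    and add: "\<forall>x\<in>carrier_vec r. \<forall>y\<in>carrier_vec r. \<phi> (x + y) = \<phi> x + \<phi> y"
    and sm: "\<forall>c. \<forall>x\<in>carrier_vec r. \<phi> (c \<cdot>\<^sub>v x) = c \<cdot>\<^sub>v \<phi> x"
    and eqv: "\<forall>g\<in>carrier G. \<forall>x\<in>carrier_vec r. \<phi> (\<rho> g *\<^sub>v x) = \<sigma> g *\<^sub>v \<phi> x"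
    using V_isotypic W(2) unfolding rep_iso_to_def by blast
  have img: "\<forall>x\<in>carrier_vec r. \<phi> x \<in> W" using bij unfolding bij_betw_def by auto
  hence fc: "\<forall>x\<in>carrier_vec r. \<phi> x \<in> carrier_vec m" using Wc by auto
  obtain M where M: "M \<in> carrier_mat m r" "\<forall>x\<in>carrier_vec r. \<phi> x = M *\<^sub>v x"
    using lin_map_mat[OF fc add sm] by blast
  have MH: "M \<in> HH"
  proof -
    have "M * \<rho> g = \<sigma> g * M" if g: "g \<in> carrier G" for g
    proof (rule mat_eq_vecI[of _ m r])
      show "M * \<rho> g \<in> carrier_mat m r" "\<sigma> g * M \<in> carrier_mat m r"
        using M rho_c[OF g] sigma_c[OF g] by auto
      fix x :: "complex vec" assume x: "x \<in> carrier_vec r"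
      have "(M * \<rho> g) *\<^sub>v x = \<phi> (\<rho> g *\<^sub>v x)"
        using M rho_c[OF g] x by (simp add: assoc_mult_mat_vec[of _ m r _ r])
      also have "\<dots> = \<sigma> g *\<^sub>v (M *\<^sub>v x)" using eqv g x M by simp
      also have "\<dots> = (\<sigma> g * M) *\<^sub>v x"
        using M sigma_c[OF g] x by (simp add: assoc_mult_mat_vec[of _ m m _ r])
      finally show "(M * \<rho> g) *\<^sub>v x = (\<sigma> g * M) *\<^sub>v x" .
    qed
    thus ?thesis unfolding hom_space_def using M by auto
  qed
  obtain w where w: "w \<in> W" "w \<noteq> 0\<^sub>v m" using Wne W0 by auto
  then obtain x where x: "x \<in> carrier_vec r" "\<phi> x = w" using bij unfolding bij_betw_def by auto
  show ?thesis
    using MH x w M img W(1) by (intro bexI[of _ M]) auto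
qed

lemma SPAN:
  assumes U: "csubspace_of m U" and gen: "\<forall>h\<in>HH. \<forall>x\<in>carrier_vec r. h *\<^sub>v x \<in> U"
  shows "U = carrier_vec m"
proof -
  have Uc: "U \<subseteq> carrier_vec m" and U0: "0\<^sub>v m \<in> U" and Uad: "\<forall>x\<in>U. \<forall>y\<in>U. x + y \<in> U"
    and Usm: "\<forall>c. \<forall>x\<in>U. c \<cdot>\<^sub>v x \<in> U"
    using U unfolding csubspace_of_def by auto
  define U0 where "U0 = {v \<in> carrier_vec m. \<forall>g\<in>carrier G. \<sigma> g *\<^sub>v v \<in> U}"
  have cs0: "csubspace_of m U0"
    unfolding csubspace_of_def U0_def
  proof (intro conjI ballI allI)
    show "0\<^sub>v m \<in> {v \<in> carrier_vec m. \<forall>g\<in>carrier G. \<sigma> g *\<^sub>v v \<in> U}"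
      using mat_vec_zero[OF sigma_c] U0 by auto
    fix x y assume x: "x \<in> {v \<in> carrier_vec m. \<forall>g\<in>carrier G. \<sigma> g *\<^sub>v v \<in> U}"
      and y: "y \<in> {v \<in> carrier_vec m. \<forall>g\<in>carrier G. \<sigma> g *\<^sub>v v \<in> U}"
    have "\<sigma> g *\<^sub>v (x + y) \<in> U" if g: "g \<in> carrier G" for g
      using x y g Uad sigma_c[OF g] by (simp add: mult_add_distrib_mat_vec)
    thus "x + y \<in> {v \<in> carrier_vec m. \<forall>g\<in>carrier G. \<sigma> g *\<^sub>v v \<in> U}" using x y by auto
  next
    fix c x assume x: "x \<in> {v \<in> carrier_vec m. \<forall>g\<in>carrier G. \<sigma> g *\<^sub>v v \<in> U}"
    have "\<sigma> g *\<^sub>v (c \<cdot>\<^sub>v x) \<in> U" if g: "g \<in> carrier G" for g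
      using x g Usm sigma_c[OF g] by (simp add: mult_mat_vec)
    thus "c \<cdot>\<^sub>v x \<in> {v \<in> carrier_vec m. \<forall>g\<in>carrier G. \<sigma> g *\<^sub>v v \<in> U}" using x by auto
  qed auto
  have inv0: "\<forall>g\<in>carrier G. \<forall>v\<in>U0. \<sigma> g *\<^sub>v v \<in> U0"
  proof (intro ballI)
    fix g v assume g: "g \<in> carrier G" and v: "v \<in> U0"
    have "\<sigma> g' *\<^sub>v (\<sigma> g *\<^sub>v v) \<in> U" if g': "g' \<in> carrier G" for g'
    proof -
      have "\<sigma> g' *\<^sub>v (\<sigma> g *\<^sub>v v) = \<sigma> (g' \<otimes>\<^bsub>G\<^esub> g) *\<^sub>v v"
        using sigma_mult[OF g' g] sigma_c[OF g] sigma_c[OF g'] v unfolding U0_def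
        by (simp add: assoc_mult_mat_vec[of _ m m _ m])
      moreover have "g' \<otimes>\<^bsub>G\<^esub> g \<in> carrier G" using g g' grp by (simp add: group.is_monoid monoid.m_closed)
      ultimately show ?thesis using v unfolding U0_def by auto
    qed
    thus "\<sigma> g *\<^sub>v v \<in> U0" using v g sigma_c[OF g] unfolding U0_def by auto
  qed
  have sub0: "U0 \<subseteq> U"
  proof
    fix v assume "v \<in> U0"
    moreover have "\<one>\<^bsub>G\<^esub> \<in> carrier G" using grp by (simp add: group.is_monoid monoid.one_closed)
    ultimately have "\<sigma> \<one>\<^bsub>G\<^esub> *\<^sub>v v \<in> U" "v \<in> carrier_vec m" unfolding U0_def by auto
    thus "v \<in> U" using sigma_one by simp
  qed
  have gen0: "\<forall>h\<in>HH. \<forall>x\<in>carrier_vec r. h *\<^sub>v x \<in> U0"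
  proof (intro ballI)
    fix h and x :: "complex vec" assume h: "h \<in> HH" and x: "x \<in> carrier_vec r"
    have "\<sigma> g *\<^sub>v (h *\<^sub>v x) \<in> U" if g: "g \<in> carrier G" for g
    proof -
      have "\<rho> g *\<^sub>v x \<in> carrier_vec r" using rho_c[OF g] x by simp
      hence "h *\<^sub>v (\<rho> g *\<^sub>v x) \<in> U" using gen h by simp
      thus ?thesis using HH_vec[OF h g x] by simp
    qed
    thus "h *\<^sub>v x \<in> U0" unfolding U0_def using HH_c[OF h] x by auto
  qed
  have "U0 = carrier_vec m"
  proof (rule ccontr)
    assume ne: "U0 \<noteq> carrier_vec m"
    obtain w where w: "w \<in> carrier_vec m" "w \<noteq> 0\<^sub>v m" "\<forall>u\<in>U0. u \<bullet>c w = 0"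
      using orth_exists[OF cs0 ne] by blast
    define W where "W = {w \<in> carrier_vec m. \<forall>u\<in>U0. u \<bullet>c w = 0}"
    have U0c: "U0 \<subseteq> carrier_vec m" using cs0 unfolding csubspace_of_def by auto
    have csW: "csubspace_of m W"
      unfolding csubspace_of_def W_def
    proof (intro conjI ballI allI)
      fix a b assume a: "a \<in> {w \<in> carrier_vec m. \<forall>u\<in>U0. u \<bullet>c w = 0}"
        and b: "b \<in> {w \<in> carrier_vec m. \<forall>u\<in>U0. u \<bullet>c w = 0}"
      have "u \<bullet>c (a + b) = 0" if u: "u \<in> U0" for u
      proof -
        have uc: "u \<in> carrier_vec m" using u U0c by auto
        have "u \<bullet>c (a + b) = u \<bullet> (conjugate a + conjugate b)"
          using a b by (simp add: conjugate_add_vec[of _ m])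
        also have "\<dots> = u \<bullet>c a + u \<bullet>c b" using a b uc by (simp add: scalar_prod_add_distrib[of _ m])
        finally show ?thesis using a b u by simp
      qed
      thus "a + b \<in> {w \<in> carrier_vec m. \<forall>u\<in>U0. u \<bullet>c w = 0}" using a b by auto
    next
      fix c a assume a: "a \<in> {w \<in> carrier_vec m. \<forall>u\<in>U0. u \<bullet>c w = 0}"
      have "u \<bullet>c (c \<cdot>\<^sub>v a) = 0" if u: "u \<in> U0" for u
      proof -
        have uc: "u \<in> carrier_vec m" using u U0c by auto
        have "u \<bullet>c (c \<cdot>\<^sub>v a) = u \<bullet> (cnj c \<cdot>\<^sub>v conjugate a)"
          by (simp add: conjugate_smult_vec)
        also have "\<dots> = cnj c * (u \<bullet>c a)" using a uc by simp
        finally show ?thesis using a u by simp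
      qed
      thus "c \<cdot>\<^sub>v a \<in> {w \<in> carrier_vec m. \<forall>u\<in>U0. u \<bullet>c w = 0}" using a by auto
    qed (use U0c in auto)
    have invW: "\<forall>g\<in>carrier G. \<forall>w\<in>W. \<sigma> g *\<^sub>v w \<in> W"
    proof (intro ballI)
      fix g a assume g: "g \<in> carrier G" and a: "a \<in> W"
      have ac: "a \<in> carrier_vec m" using a W_def by auto
      have "u \<bullet>c (\<sigma> g *\<^sub>v a) = 0" if u: "u \<in> U0" for u
      proof -
        have uc: "u \<in> carrier_vec m" using u U0c by auto
        have sc: "map_mat cnj (\<sigma> g) \<in> carrier_mat m m" using sigma_c[OF g] by simp
        have tr: "transpose_mat (map_mat cnj (\<sigma> g)) = \<sigma> (inv\<^bsub>G\<^esub> g)"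
          unfolding sigma_inv[OF g] ctrans_def by (rule eq_matI) auto
        have "u \<bullet>c (\<sigma> g *\<^sub>v a) = u \<bullet> (map_mat cnj (\<sigma> g) *\<^sub>v conjugate a)"
          using conj_mat_vec[OF sigma_c[OF g] ac] by simp
        also have "\<dots> = (transpose_mat (map_mat cnj (\<sigma> g)) *\<^sub>v u) \<bullet> conjugate a"
          using transpose_vec_mult_scalar[OF sc _ uc, of "conjugate a"] ac by simp
        also have "\<dots> = (\<sigma> (inv\<^bsub>G\<^esub> g) *\<^sub>v u) \<bullet>c a" using tr by simp
        also have "\<dots> = 0" using a inv0 inv_c[OF g] u unfolding W_def by auto
        finally show ?thesis .
      qed
      thus "\<sigma> g *\<^sub>v a \<in> W" unfolding W_def using ac sigma_c[OF g] by auto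
    qed
    have Wne: "W \<noteq> {0\<^sub>v m}" using w unfolding W_def by auto
    obtain h where h: "h \<in> HH" "\<exists>x\<in>carrier_vec r. h *\<^sub>v x \<noteq> 0\<^sub>v m" "\<forall>x\<in>carrier_vec r. h *\<^sub>v x \<in> W"
      using KER[of W] csW invW Wne unfolding invariant_subspace_def by blast
    obtain x where x: "x \<in> carrier_vec r" "h *\<^sub>v x \<noteq> 0\<^sub>v m" using h by auto
    have "(h *\<^sub>v x) \<bullet>c (h *\<^sub>v x) = 0"
      using h(3) x gen0 h(1) unfolding W_def by auto
    moreover have "h *\<^sub>v x \<in> carrier_vec m" using HH_c[OF h(1)] x by simp
    ultimately have "h *\<^sub>v x = 0\<^sub>v m" using conjugate_square_eq_0_vec[of "h *\<^sub>v x" m] by simp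
    thus False using x by simp
  qed
  thus ?thesis using sub0 Uc by auto
qed


lemma SPANd:
  assumes U: "csubspace_of m U" and gen: "\<forall>F\<in>HD. \<forall>t\<in>carrier_vec r. F *\<^sub>v t \<in> U"
  shows "U = carrier_vec m"
proof -
  have "\<forall>h\<in>HH. \<forall>x\<in>carrier_vec r. h *\<^sub>v x \<in> conjugate ` U"
  proof (intro ballI)
    fix h and x :: "complex vec" assume h: "h \<in> HH" and x: "x \<in> carrier_vec r"
    have "map_mat cnj h *\<^sub>v conjugate x \<in> U" using gen conj_HH[OF h] x by simp
    moreover have "map_mat cnj h *\<^sub>v conjugate x = conjugate (h *\<^sub>v x)"
      using conj_mat_vec[OF HH_c[OF h] x] .
    ultimately have "conjugate (h *\<^sub>v x) \<in> U" by simp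
    hence "conjugate (conjugate (h *\<^sub>v x)) \<in> conjugate ` U" by blast
    thus "h *\<^sub>v x \<in> conjugate ` U" by simp
  qed
  hence "conjugate ` U = carrier_vec m" using SPAN[OF csub_conj[OF U]] by simp
  thus ?thesis by (metis conj_image_eq_iff conj_image_carrier)
qed

lemma KERd:
  assumes inv: "invariant_subspace G m (dual_rep G \<sigma>) K" and ne: "K \<noteq> {0\<^sub>v m}"
  shows "\<exists>F\<in>HD. (\<exists>t\<in>carrier_vec r. F *\<^sub>v t \<noteq> 0\<^sub>v m) \<and> (\<forall>t\<in>carrier_vec r. F *\<^sub>v t \<in> K)"
proof -
  have tt: "\<forall>g\<in>carrier G. \<sigma> g = map_mat cnj (dual_rep G \<sigma> g)" using sigmad by simp
  have tc: "\<forall>g\<in>carrier G. dual_rep G \<sigma> g \<in> carrier_mat m m" using sigmad_c by simp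
  have inv': "invariant_subspace G m \<sigma> (conjugate ` K)" using inv_conj[OF tt tc inv] .
  have ne': "conjugate ` K \<noteq> {0\<^sub>v m}" using ne by (metis conj_image_eq_iff conj_image_zero)
  obtain h where h: "h \<in> HH" "\<exists>x\<in>carrier_vec r. h *\<^sub>v x \<noteq> 0\<^sub>v m"
    "\<forall>x\<in>carrier_vec r. h *\<^sub>v x \<in> conjugate ` K"
    using KER[OF inv' ne'] by blast
  have hc: "h \<in> carrier_mat m r" using HH_c[OF h(1)] .
  have F: "map_mat cnj h *\<^sub>v t = conjugate (h *\<^sub>v conjugate t)" if "t \<in> carrier_vec r" for t
    using conj_mat_vec2[OF hc that] .
  have "\<forall>t\<in>carrier_vec r. map_mat cnj h *\<^sub>v t \<in> K"
  proof
    fix t :: "complex vec" assume t: "t \<in> carrier_vec r"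
    have "h *\<^sub>v conjugate t \<in> conjugate ` K" using h(3) t by simp
    hence "conjugate (h *\<^sub>v conjugate t) \<in> conjugate ` conjugate ` K" by blast
    thus "map_mat cnj h *\<^sub>v t \<in> K" using F[OF t] by simp
  qed
  moreover have "\<exists>t\<in>carrier_vec r. map_mat cnj h *\<^sub>v t \<noteq> 0\<^sub>v m"
  proof -
    obtain x where x: "x \<in> carrier_vec r" "h *\<^sub>v x \<noteq> 0\<^sub>v m" using h(2) by blast
    have "map_mat cnj h *\<^sub>v conjugate x = conjugate (h *\<^sub>v x)" using F[of "conjugate x"] x by simp
    hence "map_mat cnj h *\<^sub>v conjugate x \<noteq> 0\<^sub>v m" using x(2) by simp
    thus ?thesis using x(1) by (intro bexI[of _ "conjugate x"]) auto
  qed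
  ultimately show ?thesis using conj_HH[OF h(1)] by blast
qed

lemma rhod_irr: "irreducible_rep G r (dual_rep G \<rho>)"
  using irr_conj[of G "dual_rep G \<rho>" \<rho> r] rhod rho_c R_irr by auto

lemma L2:
  assumes tirr: "irreducible_rep G r \<tau>" and tc: "\<forall>g\<in>carrier G. \<tau> g \<in> carrier_mat r r"
    and cc: "\<forall>x\<in>carrier_vec r. \<chi> x \<in> carrier_vec m"
    and ca: "\<forall>x\<in>carrier_vec r. \<forall>y\<in>carrier_vec r. \<chi> (x + y) = \<chi> x + \<chi> y"
    and cs: "\<forall>c. \<forall>x\<in>carrier_vec r. \<chi> (c \<cdot>\<^sub>v x) = c \<cdot>\<^sub>v \<chi> x"
    and ce: "\<forall>g\<in>carrier G. \<forall>x\<in>carrier_vec r. \<chi> (\<tau> g *\<^sub>v x) = \<sigma> g *\<^sub>v \<chi> x"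
    and x0: "x0 \<in> carrier_vec r" and nz: "\<chi> x0 \<noteq> 0\<^sub>v m"
  shows "rep_iso_to G r \<rho> r \<tau> (carrier_vec r)"
proof -
  have smz: "c \<cdot>\<^sub>v 0\<^sub>v n = (0\<^sub>v n :: complex vec)" for c :: complex and n by (rule eq_vecI) auto
  have c0: "\<chi> (0\<^sub>v r) = 0\<^sub>v m"
  proof -
    have "\<chi> (0\<^sub>v r) = \<chi> (0 \<cdot>\<^sub>v 0\<^sub>v r)" by (simp add: smz)
    also have "\<dots> = 0 \<cdot>\<^sub>v \<chi> (0\<^sub>v r)" using cs by simp
    also have "\<dots> = 0\<^sub>v m"
    proof -
      have "\<chi> (0\<^sub>v r) \<in> carrier_vec m" using cc by simp
      thus ?thesis by (intro eq_vecI) auto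
    qed
    finally show ?thesis .
  qed
  define Ker where "Ker = {x \<in> carrier_vec r. \<chi> x = 0\<^sub>v m}"
  have invK: "invariant_subspace G r \<tau> Ker"
    unfolding invariant_subspace_def csubspace_of_def Ker_def
  proof (intro conjI ballI allI)
    fix x y assume x: "x \<in> {x \<in> carrier_vec r. \<chi> x = 0\<^sub>v m}" and y: "y \<in> {x \<in> carrier_vec r. \<chi> x = 0\<^sub>v m}"
    thus "x + y \<in> {x \<in> carrier_vec r. \<chi> x = 0\<^sub>v m}" using ca by auto
  next
    fix c x assume x: "x \<in> {x \<in> carrier_vec r. \<chi> x = 0\<^sub>v m}"
    thus "c \<cdot>\<^sub>v x \<in> {x \<in> carrier_vec r. \<chi> x = 0\<^sub>v m}" using cs smz by auto
  next
    fix g x assume g: "g \<in> carrier G" and x: "x \<in> {x \<in> carrier_vec r. \<chi> x = 0\<^sub>v m}"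
    thus "\<tau> g *\<^sub>v x \<in> {x \<in> carrier_vec r. \<chi> x = 0\<^sub>v m}"
      using ce tc sigma_c[OF g] by auto
  qed (use c0 in auto)
  have "Ker = {0\<^sub>v r} \<or> Ker = carrier_vec r"
    using tirr invK unfolding irreducible_rep_def irreducible_subrep_def Ker_def by auto
  moreover have "Ker \<noteq> carrier_vec r" using x0 nz unfolding Ker_def by auto
  ultimately have K0: "Ker = {0\<^sub>v r}" by simp
  have inj: "inj_on \<chi> (carrier_vec r)"
  proof (rule inj_onI)
    fix x y assume x: "x \<in> carrier_vec r" and y: "y \<in> carrier_vec r" and e: "\<chi> x = \<chi> y"
    have d: "x + (-1) \<cdot>\<^sub>v y \<in> carrier_vec r" using x y by simp
    have "\<chi> (x + (-1) \<cdot>\<^sub>v y) = \<chi> x + (-1) \<cdot>\<^sub>v \<chi> y" using ca cs x y by simp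
    also have "\<dots> = 0\<^sub>v m" using e vec_sub_self[of "\<chi> y" m] cc y by simp
    finally have "x + (-1) \<cdot>\<^sub>v y \<in> Ker" using d unfolding Ker_def by simp
    hence "x + (-1) \<cdot>\<^sub>v y = 0\<^sub>v r" using K0 by simp
    thus "x = y" using vec_sub_zero x y by blast
  qed
  define W where "W = \<chi> ` carrier_vec r"
  have Wc: "W \<subseteq> carrier_vec m" using cc W_def by auto
  have csW: "csubspace_of m W"
    unfolding csubspace_of_def W_def
  proof (intro conjI ballI allI)
    show "0\<^sub>v m \<in> \<chi> ` carrier_vec r" using c0 by (metis zero_carrier_vec image_eqI)
    fix a b assume "a \<in> \<chi> ` carrier_vec r" "b \<in> \<chi> ` carrier_vec r"
    then obtain x y where "x \<in> carrier_vec r" "y \<in> carrier_vec r" "a = \<chi> x" "b = \<chi> y" by auto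
    thus "a + b \<in> \<chi> ` carrier_vec r" using ca by (metis add_carrier_vec image_eqI)
  next
    fix c a assume "a \<in> \<chi> ` carrier_vec r"
    then obtain x where "x \<in> carrier_vec r" "a = \<chi> x" by auto
    thus "c \<cdot>\<^sub>v a \<in> \<chi> ` carrier_vec r" using cs by (metis smult_carrier_vec image_eqI)
  qed (use cc in auto)
  have invW: "invariant_subspace G m \<sigma> W"
    unfolding invariant_subspace_def
  proof (intro conjI ballI)
    show "csubspace_of m W" by (rule csW)
    fix g a assume g: "g \<in> carrier G" and "a \<in> W"
    then obtain x where x: "x \<in> carrier_vec r" "a = \<chi> x" unfolding W_def by auto
    have "\<sigma> g *\<^sub>v a = \<chi> (\<tau> g *\<^sub>v x)" using ce g x by simp
    moreover have "\<tau> g *\<^sub>v x \<in> carrier_vec r" using mult_mat_vec_carrier[of "\<tau> g" r r x] tc g x by simp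
    ultimately show "\<sigma> g *\<^sub>v a \<in> W" unfolding W_def by simp
  qed
  have irrW: "irreducible_subrep G m \<sigma> W"
    unfolding irreducible_subrep_def
  proof (intro conjI allI impI)
    show "invariant_subspace G m \<sigma> W" by (rule invW)
    show "W \<noteq> {0\<^sub>v m}" using x0 nz unfolding W_def by auto
    fix U assume U: "invariant_subspace G m \<sigma> U \<and> U \<subseteq> W"
    have Ucs: "csubspace_of m U" and Ui: "\<forall>g\<in>carrier G. \<forall>w\<in>U. \<sigma> g *\<^sub>v w \<in> U"
      using U unfolding invariant_subspace_def by auto
    have U0: "0\<^sub>v m \<in> U" and Uad: "\<forall>x\<in>U. \<forall>y\<in>U. x + y \<in> U" and Usm: "\<forall>c. \<forall>x\<in>U. c \<cdot>\<^sub>v x \<in> U"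
      using Ucs unfolding csubspace_of_def by auto
    define U' where "U' = {x \<in> carrier_vec r. \<chi> x \<in> U}"
    have invU': "invariant_subspace G r \<tau> U'"
      unfolding invariant_subspace_def csubspace_of_def U'_def
    proof (intro conjI ballI allI)
      fix x y assume "x \<in> {x \<in> carrier_vec r. \<chi> x \<in> U}" "y \<in> {x \<in> carrier_vec r. \<chi> x \<in> U}"
      thus "x + y \<in> {x \<in> carrier_vec r. \<chi> x \<in> U}" using ca Uad by auto
    next
      fix c x assume "x \<in> {x \<in> carrier_vec r. \<chi> x \<in> U}"
      thus "c \<cdot>\<^sub>v x \<in> {x \<in> carrier_vec r. \<chi> x \<in> U}" using cs Usm by auto
    next
      fix g x assume g: "g \<in> carrier G" and "x \<in> {x \<in> carrier_vec r. \<chi> x \<in> U}"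
      thus "\<tau> g *\<^sub>v x \<in> {x \<in> carrier_vec r. \<chi> x \<in> U}" using ce tc Ui by auto
    qed (use c0 U0 in auto)
    have "U' = {0\<^sub>v r} \<or> U' = carrier_vec r"
      using tirr invU' unfolding irreducible_rep_def irreducible_subrep_def U'_def by auto
    thus "U = {0\<^sub>v m} \<or> U = W"
    proof
      assume u: "U' = {0\<^sub>v r}"
      have "U \<subseteq> {0\<^sub>v m}"
      proof
        fix u assume uU: "u \<in> U"
        then obtain x where x: "x \<in> carrier_vec r" "u = \<chi> x" using U unfolding W_def by auto
        hence "x \<in> U'" using uU unfolding U'_def by auto
        thus "u \<in> {0\<^sub>v m}" using u x c0 by auto
      qed
      thus ?thesis using U0 by auto
    next
      assume u: "U' = carrier_vec r"
      have "W \<subseteq> U" unfolding W_def using u unfolding U'_def by auto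
      thus ?thesis using U by auto
    qed
  qed
  obtain \<phi> where bij: "bij_betw \<phi> (carrier_vec r) W"
    and add: "\<forall>x\<in>carrier_vec r. \<forall>y\<in>carrier_vec r. \<phi> (x + y) = \<phi> x + \<phi> y"
    and sm: "\<forall>c. \<forall>x\<in>carrier_vec r. \<phi> (c \<cdot>\<^sub>v x) = c \<cdot>\<^sub>v \<phi> x"
    and eqv: "\<forall>g\<in>carrier G. \<forall>x\<in>carrier_vec r. \<phi> (\<rho> g *\<^sub>v x) = \<sigma> g *\<^sub>v \<phi> x"
    using V_isotypic irrW unfolding rep_iso_to_def by blast
  define \<theta> where "\<theta> x = inv_into (carrier_vec r) \<chi> (\<phi> x)" for x
  have phW: "\<phi> x \<in> W" if "x \<in> carrier_vec r" for x using bij that unfolding bij_betw_def by auto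
  have thc: "\<theta> x \<in> carrier_vec r" if "x \<in> carrier_vec r" for x
    unfolding \<theta>_def using phW[OF that] unfolding W_def by (simp add: inv_into_into)
  have cth: "\<chi> (\<theta> x) = \<phi> x" if "x \<in> carrier_vec r" for x
    unfolding \<theta>_def using phW[OF that] unfolding W_def by (simp add: f_inv_into_f)
  have injc: "\<And>a b. a \<in> carrier_vec r \<Longrightarrow> b \<in> carrier_vec r \<Longrightarrow> \<chi> a = \<chi> b \<Longrightarrow> a = b"
    using inj unfolding inj_on_def by blast
  have "bij_betw \<theta> (carrier_vec r) (carrier_vec r)"
    unfolding bij_betw_def
  proof (intro conjI)
    show "inj_on \<theta> (carrier_vec r)"
    proof (rule inj_onI)
      fix x y assume x: "x \<in> carrier_vec r" and y: "y \<in> carrier_vec r" and e: "\<theta> x = \<theta> y"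
      have "\<phi> x = \<phi> y" using cth[OF x] cth[OF y] e by metis
      thus "x = y" using bij x y unfolding bij_betw_def inj_on_def by blast
    qed
    show "\<theta> ` carrier_vec r = carrier_vec r"
    proof
      show "\<theta> ` carrier_vec r \<subseteq> carrier_vec r" using thc by auto
      show "carrier_vec r \<subseteq> \<theta> ` carrier_vec r"
      proof
        fix y :: "complex vec" assume y: "y \<in> carrier_vec r"
        have "\<chi> y \<in> W" unfolding W_def using y by simp
        then obtain x where x: "x \<in> carrier_vec r" "\<phi> x = \<chi> y" using bij unfolding bij_betw_def by force
        have "\<theta> x = y" using injc[OF thc[OF x(1)] y] cth[OF x(1)] x(2) by simp
        thus "y \<in> \<theta> ` carrier_vec r" using x(1) by blast
      qed
    qed
  qed
  moreover have "\<forall>x\<in>carrier_vec r. \<forall>y\<in>carrier_vec r. \<theta> (x + y) = \<theta> x + \<theta> y"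
  proof (intro ballI)
    fix x y :: "complex vec" assume x: "x \<in> carrier_vec r" and y: "y \<in> carrier_vec r"
    have "\<chi> (\<theta> (x + y)) = \<chi> (\<theta> x + \<theta> y)"
      using cth[of "x + y"] cth[OF x] cth[OF y] add x y ca thc[OF x] thc[OF y] by simp
    thus "\<theta> (x + y) = \<theta> x + \<theta> y" using injc thc x y by simp
  qed
  moreover have "\<forall>c. \<forall>x\<in>carrier_vec r. \<theta> (c \<cdot>\<^sub>v x) = c \<cdot>\<^sub>v \<theta> x"
  proof (intro allI ballI)
    fix c and x :: "complex vec" assume x: "x \<in> carrier_vec r"
    have "\<chi> (\<theta> (c \<cdot>\<^sub>v x)) = \<chi> (c \<cdot>\<^sub>v \<theta> x)"
      using cth[of "c \<cdot>\<^sub>v x"] cth[OF x] sm x cs thc[OF x] by simp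
    thus "\<theta> (c \<cdot>\<^sub>v x) = c \<cdot>\<^sub>v \<theta> x" using injc thc x by simp
  qed
  moreover have "\<forall>g\<in>carrier G. \<forall>x\<in>carrier_vec r. \<theta> (\<rho> g *\<^sub>v x) = \<tau> g *\<^sub>v \<theta> x"
  proof (intro ballI)
    fix g and x :: "complex vec" assume g: "g \<in> carrier G" and x: "x \<in> carrier_vec r"
    have rx: "\<rho> g *\<^sub>v x \<in> carrier_vec r" using rho_c[OF g] x by simp
    have "\<chi> (\<theta> (\<rho> g *\<^sub>v x)) = \<chi> (\<tau> g *\<^sub>v \<theta> x)"
      using cth[OF rx] cth[OF x] eqv g x ce thc[OF x] by simp
    moreover have "\<tau> g *\<^sub>v \<theta> x \<in> carrier_vec r"
      using mult_mat_vec_carrier[of "\<tau> g" r r "\<theta> x"] tc g thc[OF x] by simp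
    ultimately show "\<theta> (\<rho> g *\<^sub>v x) = \<tau> g *\<^sub>v \<theta> x" using injc thc[OF rx] by blast
  qed
  ultimately show ?thesis unfolding rep_iso_to_def by blast
qed

lemma no_hom_dual:
  assumes cc: "\<forall>x\<in>carrier_vec r. \<chi> x \<in> carrier_vec m"
    and ca: "\<forall>x\<in>carrier_vec r. \<forall>y\<in>carrier_vec r. \<chi> (x + y) = \<chi> x + \<chi> y"
    and cs: "\<forall>c. \<forall>x\<in>carrier_vec r. \<chi> (c \<cdot>\<^sub>v x) = c \<cdot>\<^sub>v \<chi> x"
    and ce: "\<forall>g\<in>carrier G. \<forall>x\<in>carrier_vec r. \<chi> (dual_rep G \<rho> g *\<^sub>v x) = \<sigma> g *\<^sub>v \<chi> x"
    and x: "x \<in> carrier_vec r"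
  shows "\<chi> x = 0\<^sub>v m"
  using L2[OF rhod_irr _ cc ca cs ce x] rhod_c R_not_self_dual by auto

lemma no_hom_to_dual:
  fixes \<psi> :: "complex vec \<Rightarrow> complex vec"
  assumes pc: "\<forall>x\<in>carrier_vec r. \<psi> x \<in> carrier_vec m"
    and pa: "\<forall>x\<in>carrier_vec r. \<forall>y\<in>carrier_vec r. \<psi> (x + y) = \<psi> x + \<psi> y"
    and ps: "\<forall>c. \<forall>x\<in>carrier_vec r. \<psi> (c \<cdot>\<^sub>v x) = c \<cdot>\<^sub>v \<psi> x"
    and pe: "\<forall>g\<in>carrier G. \<forall>x\<in>carrier_vec r. \<psi> (\<rho> g *\<^sub>v x) = dual_rep G \<sigma> g *\<^sub>v \<psi> x"
    and x: "x \<in> carrier_vec r"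
  shows "\<psi> x = 0\<^sub>v m"
proof -
  define \<chi> where "\<chi> y = conjugate (\<psi> (conjugate y))" for y
  have cc: "\<forall>x\<in>carrier_vec r. \<chi> x \<in> carrier_vec m" using pc unfolding \<chi>_def by simp
  have ca: "\<forall>x\<in>carrier_vec r. \<forall>y\<in>carrier_vec r. \<chi> (x + y) = \<chi> x + \<chi> y"
  proof (intro ballI)
    fix a b :: "complex vec" assume a: "a \<in> carrier_vec r" and b: "b \<in> carrier_vec r"
    have "\<chi> (a + b) = conjugate (\<psi> (conjugate a + conjugate b))"
      unfolding \<chi>_def using a b by (simp add: conjugate_add_vec[of _ r])
    also have "\<dots> = conjugate (\<psi> (conjugate a) + \<psi> (conjugate b))" using pa a b by simp
    also have "\<dots> = \<chi> a + \<chi> b" unfolding \<chi>_def using pc a b by (simp add: conjugate_add_vec[of _ m])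
    finally show "\<chi> (a + b) = \<chi> a + \<chi> b" .
  qed
  have cs: "\<forall>c. \<forall>x\<in>carrier_vec r. \<chi> (c \<cdot>\<^sub>v x) = c \<cdot>\<^sub>v \<chi> x"
  proof (intro allI ballI)
    fix c and a :: "complex vec" assume a: "a \<in> carrier_vec r"
    have "\<chi> (c \<cdot>\<^sub>v a) = conjugate (\<psi> (cnj c \<cdot>\<^sub>v conjugate a))"
      unfolding \<chi>_def by (simp add: conjugate_smult_vec)
    also have "\<dots> = conjugate (cnj c \<cdot>\<^sub>v \<psi> (conjugate a))" using ps a by simp
    also have "\<dots> = c \<cdot>\<^sub>v \<chi> a" unfolding \<chi>_def by (simp add: conjugate_smult_vec)
    finally show "\<chi> (c \<cdot>\<^sub>v a) = c \<cdot>\<^sub>v \<chi> a" .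
  qed
  have ce: "\<forall>g\<in>carrier G. \<forall>x\<in>carrier_vec r. \<chi> (dual_rep G \<rho> g *\<^sub>v x) = \<sigma> g *\<^sub>v \<chi> x"
  proof (intro ballI)
    fix g and a :: "complex vec" assume g: "g \<in> carrier G" and a: "a \<in> carrier_vec r"
    have "conjugate (dual_rep G \<rho> g *\<^sub>v a) = \<rho> g *\<^sub>v conjugate a"
      using conj_mat_vec2[OF rho_c[OF g] a] rhod[OF g] by simp
    hence "\<chi> (dual_rep G \<rho> g *\<^sub>v a) = conjugate (\<psi> (\<rho> g *\<^sub>v conjugate a))" unfolding \<chi>_def by simp
    also have "\<dots> = conjugate (map_mat cnj (\<sigma> g) *\<^sub>v \<psi> (conjugate a))"
      using pe g a sigmad[OF g] by simp
    also have "\<dots> = \<sigma> g *\<^sub>v \<chi> a"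
      unfolding \<chi>_def using conj_mat_vec2[OF sigma_c[OF g], of "\<psi> (conjugate a)"] pc a by simp
    finally show "\<chi> (dual_rep G \<rho> g *\<^sub>v a) = \<sigma> g *\<^sub>v \<chi> a" .
  qed
  have "\<chi> (conjugate x) = 0\<^sub>v m" using no_hom_dual[OF cc ca cs ce] x by simp
  thus ?thesis unfolding \<chi>_def by (metis conj_conj_vec conjugate_zero_vec)
qed



lemma smat_vec:
  assumes "(A :: complex mat) \<in> carrier_mat n k" "y \<in> carrier_vec k"
  shows "(c \<cdot>\<^sub>m A) *\<^sub>v y = c \<cdot>\<^sub>v (A *\<^sub>v y)"
  by (rule eq_vecI) (use assms in \<open>auto simp: scalar_prod_def sum_distrib_left ac_simps\<close>)

lemma HD_T:
  assumes P: "P \<in> HD" and g: "g \<in> carrier G"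
  shows "transpose_mat P * \<sigma> g = \<rho> g * transpose_mat P"
proof -
  have ig: "inv\<^bsub>G\<^esub> g \<in> carrier G" using inv_c[OF g] .
  have ii: "inv\<^bsub>G\<^esub> (inv\<^bsub>G\<^esub> g) = g" using grp g by (simp add: group.inv_inv)
  have Pc: "P \<in> carrier_mat m r" using HD_c[OF P] .
  have "P * transpose_mat (\<rho> g) = transpose_mat (\<sigma> g) * P"
    using HD_eq[OF P ig] ii unfolding dual_rep_def by simp
  hence "transpose_mat (P * transpose_mat (\<rho> g)) = transpose_mat (transpose_mat (\<sigma> g) * P)" by simp
  moreover have "transpose_mat (P * transpose_mat (\<rho> g)) = \<rho> g * transpose_mat P"
    using transpose_mult[OF Pc, of "transpose_mat (\<rho> g)" r] rho_c[OF g] by simp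
  moreover have "transpose_mat (transpose_mat (\<sigma> g) * P) = transpose_mat P * \<sigma> g"
    using transpose_mult[of "transpose_mat (\<sigma> g)" m m P r] sigma_c[OF g] Pc by simp
  ultimately show ?thesis by simp
qed

lemma PQ_comm:
  assumes P: "P \<in> HD" and Q: "Q \<in> HH" and g: "g \<in> carrier G"
  shows "(transpose_mat P * Q) * \<rho> g = \<rho> g * (transpose_mat P * Q)"
proof -
  have Pc: "transpose_mat P \<in> carrier_mat r m" using HD_c[OF P] by simp
  have Qc: "Q \<in> carrier_mat m r" using HH_c[OF Q] .
  have "(transpose_mat P * Q) * \<rho> g = transpose_mat P * (Q * \<rho> g)"
    using Pc Qc rho_c[OF g] by simp
  also have "\<dots> = transpose_mat P * (\<sigma> g * Q)" using HH_eq[OF Q g] by simp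
  also have "\<dots> = (transpose_mat P * \<sigma> g) * Q" using Pc Qc sigma_c[OF g] by simp
  also have "\<dots> = (\<rho> g * transpose_mat P) * Q" using HD_T[OF P g] by simp
  also have "\<dots> = \<rho> g * (transpose_mat P * Q)" using Pc Qc rho_c[OF g] by simp
  finally show ?thesis .
qed

lemma PQ_diag:
  fixes P Q :: "complex mat"
  assumes Pc: "P \<in> carrier_mat m r" and Qc: "Q \<in> carrier_mat m r" and i: "i < r"
  shows "((transpose_mat P * Q) *\<^sub>v unit_vec r i) $ i = (P *\<^sub>v unit_vec r i) \<bullet> (Q *\<^sub>v unit_vec r i)"
proof -
  have u: "unit_vec r i \<in> carrier_vec r" using i by simp
  have y: "Q *\<^sub>v unit_vec r i \<in> carrier_vec m" using Qc by simp
  have "((transpose_mat P * Q) *\<^sub>v unit_vec r i) $ i = (transpose_mat P *\<^sub>v (Q *\<^sub>v unit_vec r i)) $ i"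
    using Pc Qc u by simp
  also have "\<dots> = unit_vec r i \<bullet> (transpose_mat P *\<^sub>v (Q *\<^sub>v unit_vec r i))"
    by (rule sym, rule scalar_prod_left_unit) (use Pc y i in auto)
  also have "\<dots> = (transpose_mat P *\<^sub>v (Q *\<^sub>v unit_vec r i)) \<bullet> unit_vec r i"
    by (rule comm_scalar_prod[of _ r]) (use Pc y u in auto)
  also have "\<dots> = (Q *\<^sub>v unit_vec r i) \<bullet> (P *\<^sub>v unit_vec r i)"
    using transpose_vec_mult_scalar[OF Pc u y] .
  also have "\<dots> = (P *\<^sub>v unit_vec r i) \<bullet> (Q *\<^sub>v unit_vec r i)"
    by (rule comm_scalar_prod[of _ m]) (use Pc y in auto)
  finally show ?thesis .
qed

lemma PQ_bil:
  fixes P Q :: "complex mat"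
  assumes Pc: "P \<in> carrier_mat m r" and Qc: "Q \<in> carrier_mat m r"
    and t: "t \<in> carrier_vec r" and x: "x \<in> carrier_vec r"
  shows "t \<bullet> ((transpose_mat P * Q) *\<^sub>v x) = (P *\<^sub>v t) \<bullet> (Q *\<^sub>v x)"
proof -
  have y: "Q *\<^sub>v x \<in> carrier_vec m" using Qc x by simp
  have "t \<bullet> ((transpose_mat P * Q) *\<^sub>v x) = t \<bullet> (transpose_mat P *\<^sub>v (Q *\<^sub>v x))"
    using Pc Qc x by simp
  also have "\<dots> = (transpose_mat P *\<^sub>v (Q *\<^sub>v x)) \<bullet> t"
    by (rule comm_scalar_prod[of _ r]) (use Pc y t in auto)
  also have "\<dots> = (Q *\<^sub>v x) \<bullet> (P *\<^sub>v t)"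
    using transpose_vec_mult_scalar[OF Pc t y] .
  also have "\<dots> = (P *\<^sub>v t) \<bullet> (Q *\<^sub>v x)"
    by (rule comm_scalar_prod[of _ m]) (use Pc y t in auto)
  finally show ?thesis .
qed

lemma schur0:
  assumes N: "N \<in> carrier_mat r r" and comm: "\<forall>g\<in>carrier G. N * \<rho> g = \<rho> g * N"
    and tr: "(\<Sum>i<r. (N *\<^sub>v unit_vec r i) $ i) = 0"
  shows "\<forall>x\<in>carrier_vec r. N *\<^sub>v x = 0\<^sub>v r"
proof -
  obtain lam where "lam \<in> spectrum N" using spectrum_non_empty[OF N r_pos] by blast
  then obtain v where v: "v \<in> carrier_vec r" "v \<noteq> 0\<^sub>v r" "N *\<^sub>v v = lam \<cdot>\<^sub>v v"
    unfolding spectrum_def eigenvalue_def eigenvector_def using N by auto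
  define E where "E = {x \<in> carrier_vec r. N *\<^sub>v x = lam \<cdot>\<^sub>v x}"
  have invE: "invariant_subspace G r \<rho> E"
    unfolding invariant_subspace_def csubspace_of_def E_def
  proof (intro conjI ballI allI)
    show "0\<^sub>v r \<in> {x \<in> carrier_vec r. N *\<^sub>v x = lam \<cdot>\<^sub>v x}"
      using N by (auto intro!: eq_vecI)
    fix x y assume x: "x \<in> {x \<in> carrier_vec r. N *\<^sub>v x = lam \<cdot>\<^sub>v x}"
      and y: "y \<in> {x \<in> carrier_vec r. N *\<^sub>v x = lam \<cdot>\<^sub>v x}"
    have "N *\<^sub>v (x + y) = lam \<cdot>\<^sub>v (x + y)"
      using x y N by (simp add: mult_add_distrib_mat_vec[of _ r r] smult_add_distrib_vec[of _ r])
    thus "x + y \<in> {x \<in> carrier_vec r. N *\<^sub>v x = lam \<cdot>\<^sub>v x}" using x y by simp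
  next
    fix c x assume x: "x \<in> {x \<in> carrier_vec r. N *\<^sub>v x = lam \<cdot>\<^sub>v x}"
    have "N *\<^sub>v (c \<cdot>\<^sub>v x) = lam \<cdot>\<^sub>v (c \<cdot>\<^sub>v x)"
      using x N by (simp add: mult_mat_vec[of _ r r] smult_smult_assoc mult.commute)
    thus "c \<cdot>\<^sub>v x \<in> {x \<in> carrier_vec r. N *\<^sub>v x = lam \<cdot>\<^sub>v x}" using x by simp
  next
    fix g x assume g: "g \<in> carrier G" and x: "x \<in> {x \<in> carrier_vec r. N *\<^sub>v x = lam \<cdot>\<^sub>v x}"
    have xc: "x \<in> carrier_vec r" using x by simp
    have "N *\<^sub>v (\<rho> g *\<^sub>v x) = (N * \<rho> g) *\<^sub>v x" using N rho_c[OF g] xc by simp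
    also have "\<dots> = (\<rho> g * N) *\<^sub>v x" using comm g by simp
    also have "\<dots> = \<rho> g *\<^sub>v (lam \<cdot>\<^sub>v x)" using N rho_c[OF g] xc x by simp
    also have "\<dots> = lam \<cdot>\<^sub>v (\<rho> g *\<^sub>v x)" using rho_c[OF g] xc by (simp add: mult_mat_vec)
    finally show "\<rho> g *\<^sub>v x \<in> {x \<in> carrier_vec r. N *\<^sub>v x = lam \<cdot>\<^sub>v x}"
      using rho_c[OF g] xc by simp
  qed auto
  have "E \<noteq> {0\<^sub>v r}" using v unfolding E_def by auto
  hence Eall: "E = carrier_vec r"
    using R_irr invE unfolding irreducible_rep_def irreducible_subrep_def E_def by auto
  have "(\<Sum>i<r. (N *\<^sub>v unit_vec r i) $ i) = (\<Sum>i<r. lam)"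
  proof (rule sum.cong)
    fix i assume "i \<in> {..<r}"
    hence i: "i < r" by simp
    have "unit_vec r i \<in> E" using Eall i by simp
    hence "N *\<^sub>v unit_vec r i = lam \<cdot>\<^sub>v unit_vec r i" unfolding E_def by simp
    thus "(N *\<^sub>v unit_vec r i) $ i = lam" using i by simp
  qed simp
  hence "of_nat r * lam = 0" using tr by simp
  hence l0: "lam = 0" using r_pos by simp
  show ?thesis
  proof
    fix x :: "complex vec" assume x: "x \<in> carrier_vec r"
    hence "N *\<^sub>v x = lam \<cdot>\<^sub>v x" using Eall unfolding E_def by auto
    thus "N *\<^sub>v x = 0\<^sub>v r" using l0 x by (auto intro!: eq_vecI)
  qed
qed

lemma pair_zero:
  assumes P1: "P1 \<in> HD" and Q1: "Q1 \<in> HH" and P2: "P2 \<in> HD" and Q2: "Q2 \<in> HH"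
    and hp: "hom_pairing r P1 Q1 + c * hom_pairing r P2 Q2 = 0"
    and t: "t \<in> carrier_vec r" and x: "x \<in> carrier_vec r"
  shows "(P1 *\<^sub>v t) \<bullet> (Q1 *\<^sub>v x) + c * ((P2 *\<^sub>v t) \<bullet> (Q2 *\<^sub>v x)) = 0"
proof -
  have P1c: "P1 \<in> carrier_mat m r" and P2c: "P2 \<in> carrier_mat m r"
    and Q1c: "Q1 \<in> carrier_mat m r" and Q2c: "Q2 \<in> carrier_mat m r"
    using HD_c P1 P2 HH_c Q1 Q2 by auto
  define N1 where "N1 = transpose_mat P1 * Q1"
  define N2 where "N2 = transpose_mat P2 * Q2"
  define N where "N = N1 + c \<cdot>\<^sub>m N2"
  have N1c: "N1 \<in> carrier_mat r r" and N2c: "N2 \<in> carrier_mat r r"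
    unfolding N1_def N2_def using P1c P2c Q1c Q2c by auto
  have Nc: "N \<in> carrier_mat r r" unfolding N_def using N1c N2c by simp
  have comm: "\<forall>g\<in>carrier G. N * \<rho> g = \<rho> g * N"
  proof
    fix g assume g: "g \<in> carrier G"
    have c1: "N1 * \<rho> g = \<rho> g * N1" unfolding N1_def using PQ_comm[OF P1 Q1 g] .
    have c2: "N2 * \<rho> g = \<rho> g * N2" unfolding N2_def using PQ_comm[OF P2 Q2 g] .
    have "N * \<rho> g = N1 * \<rho> g + (c \<cdot>\<^sub>m N2) * \<rho> g"
      unfolding N_def using N1c N2c rho_c[OF g] by (simp add: add_mult_distrib_mat[of _ r r])
    also have "\<dots> = N1 * \<rho> g + c \<cdot>\<^sub>m (N2 * \<rho> g)"
      using N2c rho_c[OF g] by (simp add: mult_smult_assoc_mat[of _ r r])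
    also have "\<dots> = \<rho> g * N1 + c \<cdot>\<^sub>m (\<rho> g * N2)" using c1 c2 by simp
    also have "\<dots> = \<rho> g * N1 + \<rho> g * (c \<cdot>\<^sub>m N2)"
      using N2c rho_c[OF g] by (simp add: mult_smult_distrib[of _ r r])
    also have "\<dots> = \<rho> g * N" unfolding N_def
      using N1c N2c rho_c[OF g] by (simp add: mult_add_distrib_mat[of _ r r])
    finally show "N * \<rho> g = \<rho> g * N" .
  qed
  have Nv: "N *\<^sub>v y = N1 *\<^sub>v y + c \<cdot>\<^sub>v (N2 *\<^sub>v y)" if y: "y \<in> carrier_vec r" for y
    unfolding N_def using N1c N2c y
    by (simp add: add_mult_distrib_mat_vec[of _ r r] smat_vec[of _ r r])
  have tr: "(\<Sum>i<r. (N *\<^sub>v unit_vec r i) $ i) = 0"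
  proof -
    have "(\<Sum>i<r. (N *\<^sub>v unit_vec r i) $ i)
        = (\<Sum>i<r. (P1 *\<^sub>v unit_vec r i) \<bullet> (Q1 *\<^sub>v unit_vec r i) + c * ((P2 *\<^sub>v unit_vec r i) \<bullet> (Q2 *\<^sub>v unit_vec r i)))"
    proof (rule sum.cong)
      fix i assume "i \<in> {..<r}"
      hence i: "i < r" by simp
      have "(N *\<^sub>v unit_vec r i) $ i = (N1 *\<^sub>v unit_vec r i) $ i + c * (N2 *\<^sub>v unit_vec r i) $ i"
        using Nv[of "unit_vec r i"] i N1c N2c by simp
      thus "(N *\<^sub>v unit_vec r i) $ i = (P1 *\<^sub>v unit_vec r i) \<bullet> (Q1 *\<^sub>v unit_vec r i) + c * ((P2 *\<^sub>v unit_vec r i) \<bullet> (Q2 *\<^sub>v unit_vec r i))"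
        unfolding N1_def N2_def using PQ_diag[OF P1c Q1c i] PQ_diag[OF P2c Q2c i] by simp
    qed simp
    also have "\<dots> = hom_pairing r P1 Q1 + c * hom_pairing r P2 Q2"
      unfolding hom_pairing_def by (simp add: sum.distrib sum_distrib_left)
    finally show ?thesis using hp by simp
  qed
  have "N *\<^sub>v x = 0\<^sub>v r" using schur0[OF Nc comm tr] x by simp
  hence "t \<bullet> (N *\<^sub>v x) = 0" using t by simp
  moreover have "t \<bullet> (N *\<^sub>v x) = t \<bullet> (N1 *\<^sub>v x) + c * (t \<bullet> (N2 *\<^sub>v x))"
    using Nv[OF x] t x N1c N2c by (simp add: scalar_prod_add_distrib[of _ r])
  ultimately show ?thesis
    unfolding N1_def N2_def using PQ_bil[OF P1c Q1c t x] PQ_bil[OF P2c Q2c t x] by simp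
qed

end



locale phi_setting = setting +
  fixes \<Phi> :: "complex vec \<times> complex vec \<Rightarrow> complex vec \<times> complex vec"
  assumes \<Phi>_maps: "\<Phi> ` (carrier_vec m \<times> carrier_vec m) \<subseteq> carrier_vec m \<times> carrier_vec m"
    and \<Phi>_linear: "clinear_on (carrier_vec m \<times> carrier_vec m) \<Phi> vpair_add vpair_smult vpair_add vpair_smult"
    and \<Phi>_eq: "\<forall>g\<in>carrier G. \<forall>v\<in>carrier_vec m. \<forall>f\<in>carrier_vec m.
          \<Phi> (\<sigma> g *\<^sub>v v, dual_rep G \<sigma> g *\<^sub>v f)
            = (\<sigma> g *\<^sub>v fst (\<Phi> (v, f)), dual_rep G \<sigma> g *\<^sub>v snd (\<Phi> (v, f)))"
begin

lemma Pc: "v \<in> carrier_vec m \<Longrightarrow> f \<in> carrier_vec m \<Longrightarrow> fst (\<Phi> (v, f)) \<in> carrier_vec m \<and> snd (\<Phi> (v, f)) \<in> carrier_vec m"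
  using \<Phi>_maps by (metis image_subset_iff mem_Sigma_iff prod.collapse)

lemma Padd:
  assumes "v1 \<in> carrier_vec m" "f1 \<in> carrier_vec m" "v2 \<in> carrier_vec m" "f2 \<in> carrier_vec m"
  shows "\<Phi> (v1 + v2, f1 + f2) = (fst (\<Phi> (v1, f1)) + fst (\<Phi> (v2, f2)), snd (\<Phi> (v1, f1)) + snd (\<Phi> (v2, f2)))"
proof -
  have "\<Phi> (vpair_add (v1, f1) (v2, f2)) = vpair_add (\<Phi> (v1, f1)) (\<Phi> (v2, f2))"
    using \<Phi>_linear assms unfolding clinear_on_def by auto
  thus ?thesis unfolding vpair_add_def by simp
qed

lemma Psm:
  assumes "v \<in> carrier_vec m" "f \<in> carrier_vec m"
  shows "\<Phi> (c \<cdot>\<^sub>v v, c \<cdot>\<^sub>v f) = (c \<cdot>\<^sub>v fst (\<Phi> (v, f)), c \<cdot>\<^sub>v snd (\<Phi> (v, f)))"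
proof -
  have "\<Phi> (vpair_smult c (v, f)) = vpair_smult c (\<Phi> (v, f))"
    using \<Phi>_linear assms unfolding clinear_on_def by auto
  thus ?thesis unfolding vpair_smult_def by simp
qed

lemma smz: "c \<cdot>\<^sub>v 0\<^sub>v n = (0\<^sub>v n :: complex vec)" by (rule eq_vecI) auto
lemma zz: "0\<^sub>v n + 0\<^sub>v n = (0\<^sub>v n :: complex vec)" by simp

definition "PV v = fst (\<Phi> (v, 0\<^sub>v m))"
definition "PD f = snd (\<Phi> (0\<^sub>v m, f))"

lemma PV_c: "v \<in> carrier_vec m \<Longrightarrow> PV v \<in> carrier_vec m" unfolding PV_def using Pc by simp
lemma PD_c: "f \<in> carrier_vec m \<Longrightarrow> PD f \<in> carrier_vec m" unfolding PD_def using Pc by simp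

lemma PV_add: "v \<in> carrier_vec m \<Longrightarrow> w \<in> carrier_vec m \<Longrightarrow> PV (v + w) = PV v + PV w"
  unfolding PV_def using Padd[of v "0\<^sub>v m" w "0\<^sub>v m"] by simp
lemma PD_add: "v \<in> carrier_vec m \<Longrightarrow> w \<in> carrier_vec m \<Longrightarrow> PD (v + w) = PD v + PD w"
  unfolding PD_def using Padd[of "0\<^sub>v m" v "0\<^sub>v m" w] by simp
lemma PV_sm: "v \<in> carrier_vec m \<Longrightarrow> PV (c \<cdot>\<^sub>v v) = c \<cdot>\<^sub>v PV v"
  unfolding PV_def using Psm[of v "0\<^sub>v m" c] by (simp add: smz)
lemma PD_sm: "v \<in> carrier_vec m \<Longrightarrow> PD (c \<cdot>\<^sub>v v) = c \<cdot>\<^sub>v PD v"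
  unfolding PD_def using Psm[of "0\<^sub>v m" v c] by (simp add: smz)

lemma sd0: "g \<in> carrier G \<Longrightarrow> dual_rep G \<sigma> g *\<^sub>v 0\<^sub>v m = 0\<^sub>v m"
  using sigmad_c by simp
lemma s0: "g \<in> carrier G \<Longrightarrow> \<sigma> g *\<^sub>v 0\<^sub>v m = 0\<^sub>v m"
  using sigma_c by simp

lemma PV_eq: "g \<in> carrier G \<Longrightarrow> v \<in> carrier_vec m \<Longrightarrow> PV (\<sigma> g *\<^sub>v v) = \<sigma> g *\<^sub>v PV v"
  unfolding PV_def using \<Phi>_eq sd0[of g] by (metis fst_conv zero_carrier_vec)
lemma PD_eq: "g \<in> carrier G \<Longrightarrow> f \<in> carrier_vec m \<Longrightarrow> PD (dual_rep G \<sigma> g *\<^sub>v f) = dual_rep G \<sigma> g *\<^sub>v PD f"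
  unfolding PD_def using \<Phi>_eq s0[of g] by (metis snd_conv zero_carrier_vec)

lemma P0: "\<Phi> (0\<^sub>v m, 0\<^sub>v m) = (0\<^sub>v m, 0\<^sub>v m)"
proof -
  have "\<Phi> (0 \<cdot>\<^sub>v 0\<^sub>v m, 0 \<cdot>\<^sub>v 0\<^sub>v m) = (0 \<cdot>\<^sub>v fst (\<Phi> (0\<^sub>v m, 0\<^sub>v m)), 0 \<cdot>\<^sub>v snd (\<Phi> (0\<^sub>v m, 0\<^sub>v m)))"
    using Psm by simp
  moreover have "0 \<cdot>\<^sub>v fst (\<Phi> (0\<^sub>v m, 0\<^sub>v m)) = 0\<^sub>v m" "0 \<cdot>\<^sub>v snd (\<Phi> (0\<^sub>v m, 0\<^sub>v m)) = 0\<^sub>v m"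
    using Pc[of "0\<^sub>v m" "0\<^sub>v m"] by (auto intro!: eq_vecI)
  ultimately show ?thesis by (simp add: smz)
qed

text \<open>off-diagonal blocks vanish on generators\<close>

lemma off1: "h \<in> HH \<Longrightarrow> x \<in> carrier_vec r \<Longrightarrow> snd (\<Phi> (h *\<^sub>v x, 0\<^sub>v m)) = 0\<^sub>v m"
proof -
  assume h: "h \<in> HH" and x: "x \<in> carrier_vec r"
  have hc: "h \<in> carrier_mat m r" using HH_c[OF h] .
  define \<psi> where "\<psi> y = snd (\<Phi> (h *\<^sub>v y, 0\<^sub>v m))" for y
  have "\<psi> x = 0\<^sub>v m"
  proof (rule no_hom_to_dual[of \<psi>])
    show "\<forall>x\<in>carrier_vec r. \<psi> x \<in> carrier_vec m" unfolding \<psi>_def using Pc hc by simp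
    show "\<forall>x\<in>carrier_vec r. \<forall>y\<in>carrier_vec r. \<psi> (x + y) = \<psi> x + \<psi> y"
      unfolding \<psi>_def using Padd[of _ "0\<^sub>v m" _ "0\<^sub>v m"] hc by (simp add: mult_add_distrib_mat_vec[of _ m r])
    show "\<forall>c. \<forall>x\<in>carrier_vec r. \<psi> (c \<cdot>\<^sub>v x) = c \<cdot>\<^sub>v \<psi> x"
      unfolding \<psi>_def using Psm[of _ "0\<^sub>v m"] hc by (simp add: mult_mat_vec[of _ m r] smz)
    show "\<forall>g\<in>carrier G. \<forall>x\<in>carrier_vec r. \<psi> (\<rho> g *\<^sub>v x) = dual_rep G \<sigma> g *\<^sub>v \<psi> x"
    proof (intro ballI)
      fix g and y :: "complex vec" assume g: "g \<in> carrier G" and y: "y \<in> carrier_vec r"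
      have "\<psi> (\<rho> g *\<^sub>v y) = snd (\<Phi> (\<sigma> g *\<^sub>v (h *\<^sub>v y), dual_rep G \<sigma> g *\<^sub>v 0\<^sub>v m))"
        unfolding \<psi>_def using HH_vec[OF h g y] sd0[OF g] by simp
      also have "\<dots> = dual_rep G \<sigma> g *\<^sub>v \<psi> y" unfolding \<psi>_def using \<Phi>_eq g y hc by simp
      finally show "\<psi> (\<rho> g *\<^sub>v y) = dual_rep G \<sigma> g *\<^sub>v \<psi> y" .
    qed
  qed (rule x)
  thus ?thesis unfolding \<psi>_def .
qed

lemma off2: "f \<in> HD \<Longrightarrow> t \<in> carrier_vec r \<Longrightarrow> fst (\<Phi> (0\<^sub>v m, f *\<^sub>v t)) = 0\<^sub>v m"
proof -
  assume f: "f \<in> HD" and t: "t \<in> carrier_vec r"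
  have fc: "f \<in> carrier_mat m r" using HD_c[OF f] .
  define \<chi> where "\<chi> y = fst (\<Phi> (0\<^sub>v m, f *\<^sub>v y))" for y
  have "\<chi> t = 0\<^sub>v m"
  proof (rule no_hom_dual[of \<chi>])
    show "\<forall>x\<in>carrier_vec r. \<chi> x \<in> carrier_vec m" unfolding \<chi>_def using Pc fc by simp
    show "\<forall>x\<in>carrier_vec r. \<forall>y\<in>carrier_vec r. \<chi> (x + y) = \<chi> x + \<chi> y"
      unfolding \<chi>_def using Padd[of "0\<^sub>v m" _ "0\<^sub>v m"] fc by (simp add: mult_add_distrib_mat_vec[of _ m r])
    show "\<forall>c. \<forall>x\<in>carrier_vec r. \<chi> (c \<cdot>\<^sub>v x) = c \<cdot>\<^sub>v \<chi> x"
      unfolding \<chi>_def using Psm[of "0\<^sub>v m"] fc by (simp add: mult_mat_vec[of _ m r] smz)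
    show "\<forall>g\<in>carrier G. \<forall>x\<in>carrier_vec r. \<chi> (dual_rep G \<rho> g *\<^sub>v x) = \<sigma> g *\<^sub>v \<chi> x"
    proof (intro ballI)
      fix g and y :: "complex vec" assume g: "g \<in> carrier G" and y: "y \<in> carrier_vec r"
      have "f *\<^sub>v (dual_rep G \<rho> g *\<^sub>v y) = dual_rep G \<sigma> g *\<^sub>v (f *\<^sub>v y)"
        using HD_eq[OF f g] fc rhod_c[OF g] sigmad_c[OF g] y
        by (metis assoc_mult_mat_vec)
      hence "\<chi> (dual_rep G \<rho> g *\<^sub>v y) = fst (\<Phi> (\<sigma> g *\<^sub>v 0\<^sub>v m, dual_rep G \<sigma> g *\<^sub>v (f *\<^sub>v y)))"
        unfolding \<chi>_def using s0[OF g] by simp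
      also have "\<dots> = \<sigma> g *\<^sub>v \<chi> y" unfolding \<chi>_def using \<Phi>_eq g y fc by simp
      finally show "\<chi> (dual_rep G \<rho> g *\<^sub>v y) = \<sigma> g *\<^sub>v \<chi> y" .
    qed
  qed (rule t)
  thus ?thesis unfolding \<chi>_def .
qed


lemma B1: assumes v: "v \<in> carrier_vec m" shows "snd (\<Phi> (v, 0\<^sub>v m)) = 0\<^sub>v m"
proof -
  define U where "U = {v \<in> carrier_vec m. snd (\<Phi> (v, 0\<^sub>v m)) = 0\<^sub>v m}"
  have "csubspace_of m U"
    unfolding csubspace_of_def U_def
  proof (intro conjI ballI allI)
    show "0\<^sub>v m \<in> {v \<in> carrier_vec m. snd (\<Phi> (v, 0\<^sub>v m)) = 0\<^sub>v m}" using P0 by simp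
    fix a b assume "a \<in> {v \<in> carrier_vec m. snd (\<Phi> (v, 0\<^sub>v m)) = 0\<^sub>v m}" "b \<in> {v \<in> carrier_vec m. snd (\<Phi> (v, 0\<^sub>v m)) = 0\<^sub>v m}"
    thus "a + b \<in> {v \<in> carrier_vec m. snd (\<Phi> (v, 0\<^sub>v m)) = 0\<^sub>v m}"
      using Padd[of a "0\<^sub>v m" b "0\<^sub>v m"] by simp
  next
    fix c a assume "a \<in> {v \<in> carrier_vec m. snd (\<Phi> (v, 0\<^sub>v m)) = 0\<^sub>v m}"
    thus "c \<cdot>\<^sub>v a \<in> {v \<in> carrier_vec m. snd (\<Phi> (v, 0\<^sub>v m)) = 0\<^sub>v m}"
      using Psm[of a "0\<^sub>v m" c] by (simp add: smz)
  qed auto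
  moreover have "\<forall>h\<in>HH. \<forall>x\<in>carrier_vec r. h *\<^sub>v x \<in> U"
  proof (intro ballI)
    fix h and x :: "complex vec" assume h: "h \<in> HH" and x: "x \<in> carrier_vec r"
    show "h *\<^sub>v x \<in> U" unfolding U_def using off1[OF h x] HH_c[OF h] x by simp
  qed
  ultimately have "U = carrier_vec m" by (rule SPAN)
  thus ?thesis using v unfolding U_def by auto
qed

lemma B2: assumes f: "f \<in> carrier_vec m" shows "fst (\<Phi> (0\<^sub>v m, f)) = 0\<^sub>v m"
proof -
  define U where "U = {f \<in> carrier_vec m. fst (\<Phi> (0\<^sub>v m, f)) = 0\<^sub>v m}"
  have "csubspace_of m U"
    unfolding csubspace_of_def U_def
  proof (intro conjI ballI allI)
    show "0\<^sub>v m \<in> {f \<in> carrier_vec m. fst (\<Phi> (0\<^sub>v m, f)) = 0\<^sub>v m}" using P0 by simp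
    fix a b assume "a \<in> {f \<in> carrier_vec m. fst (\<Phi> (0\<^sub>v m, f)) = 0\<^sub>v m}" "b \<in> {f \<in> carrier_vec m. fst (\<Phi> (0\<^sub>v m, f)) = 0\<^sub>v m}"
    thus "a + b \<in> {f \<in> carrier_vec m. fst (\<Phi> (0\<^sub>v m, f)) = 0\<^sub>v m}"
      using Padd[of "0\<^sub>v m" a "0\<^sub>v m" b] by simp
  next
    fix c a assume "a \<in> {f \<in> carrier_vec m. fst (\<Phi> (0\<^sub>v m, f)) = 0\<^sub>v m}"
    thus "c \<cdot>\<^sub>v a \<in> {f \<in> carrier_vec m. fst (\<Phi> (0\<^sub>v m, f)) = 0\<^sub>v m}"
      using Psm[of "0\<^sub>v m" a c] by (simp add: smz)
  qed auto
  moreover have "\<forall>F\<in>HD. \<forall>t\<in>carrier_vec r. F *\<^sub>v t \<in> U"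
  proof (intro ballI)
    fix h and x :: "complex vec" assume h: "h \<in> HD" and x: "x \<in> carrier_vec r"
    show "h *\<^sub>v x \<in> U" unfolding U_def using off2[OF h x] HD_c[OF h] x by simp
  qed
  ultimately have "U = carrier_vec m" by (rule SPANd)
  thus ?thesis using f unfolding U_def by auto
qed

lemma B3: assumes v: "v \<in> carrier_vec m" and f: "f \<in> carrier_vec m"
  shows "\<Phi> (v, f) = (PV v, PD f)"
proof -
  have "\<Phi> (v, f) = \<Phi> (v + 0\<^sub>v m, 0\<^sub>v m + f)" using v f by simp
  also have "\<dots> = (PV v + fst (\<Phi> (0\<^sub>v m, f)), snd (\<Phi> (v, 0\<^sub>v m)) + PD f)"
    unfolding PV_def PD_def using Padd[of v "0\<^sub>v m" "0\<^sub>v m" f] v f by simp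
  also have "\<dots> = (PV v, PD f)" using B1[OF v] B2[OF f] PV_c[OF v] PD_c[OF f] by simp
  finally show ?thesis .
qed

lemma P1:
  "\<exists>A D. A ` HH \<subseteq> HH \<and> clinear_on HH A (+) (\<cdot>\<^sub>m) (+) (\<cdot>\<^sub>m)
            \<and> D ` HD \<subseteq> HD \<and> clinear_on HD D (+) (\<cdot>\<^sub>m) (+) (\<cdot>\<^sub>m)
            \<and> (\<forall>h\<in>HH. \<forall>x\<in>carrier_vec r. \<Phi> (h *\<^sub>v x, 0\<^sub>v m) = (A h *\<^sub>v x, 0\<^sub>v m))
            \<and> (\<forall>f\<in>HD. \<forall>t\<in>carrier_vec r. \<Phi> (0\<^sub>v m, f *\<^sub>v t) = (0\<^sub>v m, D f *\<^sub>v t))"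
proof -
  define A where "A h = (SOME M. M \<in> carrier_mat m r \<and> (\<forall>x\<in>carrier_vec r. PV (h *\<^sub>v x) = M *\<^sub>v x))" for h
  define D where "D f = (SOME M. M \<in> carrier_mat m r \<and> (\<forall>x\<in>carrier_vec r. PD (f *\<^sub>v x) = M *\<^sub>v x))" for f
  have Aspec: "A h \<in> carrier_mat m r \<and> (\<forall>x\<in>carrier_vec r. PV (h *\<^sub>v x) = A h *\<^sub>v x)"
    if hc: "h \<in> carrier_mat m r" for h
  proof -
    have "\<exists>M \<in> carrier_mat m r. \<forall>x\<in>carrier_vec r. PV (h *\<^sub>v x) = M *\<^sub>v x"
      by (rule lin_map_mat) (use hc PV_c PV_add PV_sm in \<open>auto simp: mult_add_distrib_mat_vec[of _ m r] mult_mat_vec[of _ m r]\<close>)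
    thus ?thesis unfolding A_def by (rule someI2_bex) auto
  qed
  have Dspec: "D h \<in> carrier_mat m r \<and> (\<forall>x\<in>carrier_vec r. PD (h *\<^sub>v x) = D h *\<^sub>v x)"
    if hc: "h \<in> carrier_mat m r" for h
  proof -
    have "\<exists>M \<in> carrier_mat m r. \<forall>x\<in>carrier_vec r. PD (h *\<^sub>v x) = M *\<^sub>v x"
      by (rule lin_map_mat) (use hc PD_c PD_add PD_sm in \<open>auto simp: mult_add_distrib_mat_vec[of _ m r] mult_mat_vec[of _ m r]\<close>)
    thus ?thesis unfolding D_def by (rule someI2_bex) auto
  qed
  have AH: "A h \<in> HH" if h: "h \<in> HH" for h
  proof -
    have hc: "h \<in> carrier_mat m r" using HH_c[OF h] .
    have As: "A h \<in> carrier_mat m r" "\<forall>x\<in>carrier_vec r. PV (h *\<^sub>v x) = A h *\<^sub>v x"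
      using Aspec[OF hc] by auto
    have "A h * \<rho> g = \<sigma> g * A h" if g: "g \<in> carrier G" for g
    proof (rule mat_eq_vecI[of _ m r])
      show "A h * \<rho> g \<in> carrier_mat m r" "\<sigma> g * A h \<in> carrier_mat m r"
        using As rho_c[OF g] sigma_c[OF g] by auto
      fix x :: "complex vec" assume x: "x \<in> carrier_vec r"
      have rx: "\<rho> g *\<^sub>v x \<in> carrier_vec r" using rho_c[OF g] x by simp
      have "(A h * \<rho> g) *\<^sub>v x = A h *\<^sub>v (\<rho> g *\<^sub>v x)" using As rho_c[OF g] x by simp
      also have "\<dots> = PV (h *\<^sub>v (\<rho> g *\<^sub>v x))" using As rx by simp
      also have "\<dots> = PV (\<sigma> g *\<^sub>v (h *\<^sub>v x))" using HH_vec[OF h g x] by simp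
      also have "\<dots> = \<sigma> g *\<^sub>v PV (h *\<^sub>v x)" using PV_eq[OF g] hc x by simp
      also have "\<dots> = (\<sigma> g * A h) *\<^sub>v x" using As sigma_c[OF g] x by simp
      finally show "(A h * \<rho> g) *\<^sub>v x = (\<sigma> g * A h) *\<^sub>v x" .
    qed
    thus ?thesis unfolding hom_space_def using As by auto
  qed
  have DH: "D f \<in> HD" if f: "f \<in> HD" for f
  proof -
    have fc: "f \<in> carrier_mat m r" using HD_c[OF f] .
    have Ds: "D f \<in> carrier_mat m r" "\<forall>x\<in>carrier_vec r. PD (f *\<^sub>v x) = D f *\<^sub>v x"
      using Dspec[OF fc] by auto
    have "D f * dual_rep G \<rho> g = dual_rep G \<sigma> g * D f" if g: "g \<in> carrier G" for g
    proof (rule mat_eq_vecI[of _ m r])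
      show "D f * dual_rep G \<rho> g \<in> carrier_mat m r" "dual_rep G \<sigma> g * D f \<in> carrier_mat m r"
        using Ds rhod_c[OF g] sigmad_c[OF g] by auto
      fix x :: "complex vec" assume x: "x \<in> carrier_vec r"
      have rx: "dual_rep G \<rho> g *\<^sub>v x \<in> carrier_vec r" using rhod_c[OF g] x by simp
      have fe: "f *\<^sub>v (dual_rep G \<rho> g *\<^sub>v x) = dual_rep G \<sigma> g *\<^sub>v (f *\<^sub>v x)"
      proof -
        have "f *\<^sub>v (dual_rep G \<rho> g *\<^sub>v x) = (f * dual_rep G \<rho> g) *\<^sub>v x" using fc rhod_c[OF g] x by simp
        also have "\<dots> = (dual_rep G \<sigma> g * f) *\<^sub>v x" using HD_eq[OF f g] by simp
        also have "\<dots> = dual_rep G \<sigma> g *\<^sub>v (f *\<^sub>v x)" using fc sigmad_c[OF g] x by simp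
        finally show ?thesis .
      qed
      have "(D f * dual_rep G \<rho> g) *\<^sub>v x = D f *\<^sub>v (dual_rep G \<rho> g *\<^sub>v x)" using Ds rhod_c[OF g] x by simp
      also have "\<dots> = PD (f *\<^sub>v (dual_rep G \<rho> g *\<^sub>v x))" using Ds rx by simp
      also have "\<dots> = PD (dual_rep G \<sigma> g *\<^sub>v (f *\<^sub>v x))" using fe by simp
      also have "\<dots> = dual_rep G \<sigma> g *\<^sub>v PD (f *\<^sub>v x)" using PD_eq[OF g] fc x by simp
      also have "\<dots> = (dual_rep G \<sigma> g * D f) *\<^sub>v x" using Ds sigmad_c[OF g] x by simp
      finally show "(D f * dual_rep G \<rho> g) *\<^sub>v x = (dual_rep G \<sigma> g * D f) *\<^sub>v x" .
    qed
    thus ?thesis unfolding hom_space_def using Ds by auto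
  qed
  have Alin: "clinear_on HH A (+) (\<cdot>\<^sub>m) (+) (\<cdot>\<^sub>m)"
    unfolding clinear_on_def
  proof (intro conjI ballI allI)
    fix h1 h2 assume h1: "h1 \<in> HH" and h2: "h2 \<in> HH"
    have c1: "h1 \<in> carrier_mat m r" and c2: "h2 \<in> carrier_mat m r" using HH_c h1 h2 by auto
    have c12: "h1 + h2 \<in> carrier_mat m r" using c1 c2 by simp
    show "A (h1 + h2) = A h1 + A h2"
    proof (rule mat_eq_vecI[of _ m r])
      show "A (h1 + h2) \<in> carrier_mat m r" "A h1 + A h2 \<in> carrier_mat m r"
        using Aspec c1 c2 c12 by auto
      fix x :: "complex vec" assume x: "x \<in> carrier_vec r"
      have "A (h1 + h2) *\<^sub>v x = PV ((h1 + h2) *\<^sub>v x)" using Aspec[OF c12] x by simp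
      also have "\<dots> = PV (h1 *\<^sub>v x + h2 *\<^sub>v x)" using c1 c2 x by (simp add: add_mult_distrib_mat_vec[of _ m r])
      also have "\<dots> = PV (h1 *\<^sub>v x) + PV (h2 *\<^sub>v x)" using PV_add c1 c2 x by simp
      also have "\<dots> = A h1 *\<^sub>v x + A h2 *\<^sub>v x" using Aspec[OF c1] Aspec[OF c2] x by simp
      also have "\<dots> = (A h1 + A h2) *\<^sub>v x"
        using Aspec[OF c1] Aspec[OF c2] x by (simp add: add_mult_distrib_mat_vec[of _ m r])
      finally show "A (h1 + h2) *\<^sub>v x = (A h1 + A h2) *\<^sub>v x" .
    qed
  next
    fix c h assume h: "h \<in> HH"
    have c1: "h \<in> carrier_mat m r" using HH_c h by auto
    have c2: "c \<cdot>\<^sub>m h \<in> carrier_mat m r" using c1 by simp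
    show "A (c \<cdot>\<^sub>m h) = c \<cdot>\<^sub>m A h"
    proof (rule mat_eq_vecI[of _ m r])
      show "A (c \<cdot>\<^sub>m h) \<in> carrier_mat m r" "c \<cdot>\<^sub>m A h \<in> carrier_mat m r"
        using Aspec c1 c2 by auto
      fix x :: "complex vec" assume x: "x \<in> carrier_vec r"
      have "A (c \<cdot>\<^sub>m h) *\<^sub>v x = PV ((c \<cdot>\<^sub>m h) *\<^sub>v x)" using Aspec[OF c2] x by simp
      also have "\<dots> = PV (c \<cdot>\<^sub>v (h *\<^sub>v x))" using c1 x by (simp add: smat_vec[of _ m r])
      also have "\<dots> = c \<cdot>\<^sub>v PV (h *\<^sub>v x)" using PV_sm c1 x by simp
      also have "\<dots> = (c \<cdot>\<^sub>m A h) *\<^sub>v x"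
        using Aspec[OF c1] x by (simp add: smat_vec[of _ m r])
      finally show "A (c \<cdot>\<^sub>m h) *\<^sub>v x = (c \<cdot>\<^sub>m A h) *\<^sub>v x" .
    qed
  qed
  have Dlin: "clinear_on HD D (+) (\<cdot>\<^sub>m) (+) (\<cdot>\<^sub>m)"
    unfolding clinear_on_def
  proof (intro conjI ballI allI)
    fix h1 h2 assume h1: "h1 \<in> HD" and h2: "h2 \<in> HD"
    have c1: "h1 \<in> carrier_mat m r" and c2: "h2 \<in> carrier_mat m r" using HD_c h1 h2 by auto
    have c12: "h1 + h2 \<in> carrier_mat m r" using c1 c2 by simp
    show "D (h1 + h2) = D h1 + D h2"
    proof (rule mat_eq_vecI[of _ m r])
      show "D (h1 + h2) \<in> carrier_mat m r" "D h1 + D h2 \<in> carrier_mat m r"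
        using Dspec c1 c2 c12 by auto
      fix x :: "complex vec" assume x: "x \<in> carrier_vec r"
      have "D (h1 + h2) *\<^sub>v x = PD ((h1 + h2) *\<^sub>v x)" using Dspec[OF c12] x by simp
      also have "\<dots> = PD (h1 *\<^sub>v x + h2 *\<^sub>v x)" using c1 c2 x by (simp add: add_mult_distrib_mat_vec[of _ m r])
      also have "\<dots> = PD (h1 *\<^sub>v x) + PD (h2 *\<^sub>v x)" using PD_add c1 c2 x by simp
      also have "\<dots> = D h1 *\<^sub>v x + D h2 *\<^sub>v x" using Dspec[OF c1] Dspec[OF c2] x by simp
      also have "\<dots> = (D h1 + D h2) *\<^sub>v x"
        using Dspec[OF c1] Dspec[OF c2] x by (simp add: add_mult_distrib_mat_vec[of _ m r])
      finally show "D (h1 + h2) *\<^sub>v x = (D h1 + D h2) *\<^sub>v x" .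
    qed
  next
    fix c h assume h: "h \<in> HD"
    have c1: "h \<in> carrier_mat m r" using HD_c h by auto
    have c2: "c \<cdot>\<^sub>m h \<in> carrier_mat m r" using c1 by simp
    show "D (c \<cdot>\<^sub>m h) = c \<cdot>\<^sub>m D h"
    proof (rule mat_eq_vecI[of _ m r])
      show "D (c \<cdot>\<^sub>m h) \<in> carrier_mat m r" "c \<cdot>\<^sub>m D h \<in> carrier_mat m r"
        using Dspec c1 c2 by auto
      fix x :: "complex vec" assume x: "x \<in> carrier_vec r"
      have "D (c \<cdot>\<^sub>m h) *\<^sub>v x = PD ((c \<cdot>\<^sub>m h) *\<^sub>v x)" using Dspec[OF c2] x by simp
      also have "\<dots> = PD (c \<cdot>\<^sub>v (h *\<^sub>v x))" using c1 x by (simp add: smat_vec[of _ m r])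
      also have "\<dots> = c \<cdot>\<^sub>v PD (h *\<^sub>v x)" using PD_sm c1 x by simp
      also have "\<dots> = (c \<cdot>\<^sub>m D h) *\<^sub>v x"
        using Dspec[OF c1] x by (simp add: smat_vec[of _ m r])
      finally show "D (c \<cdot>\<^sub>m h) *\<^sub>v x = (c \<cdot>\<^sub>m D h) *\<^sub>v x" .
    qed
  qed
  have Arep: "\<forall>h\<in>HH. \<forall>x\<in>carrier_vec r. \<Phi> (h *\<^sub>v x, 0\<^sub>v m) = (A h *\<^sub>v x, 0\<^sub>v m)"
  proof (intro ballI)
    fix h and x :: "complex vec" assume h: "h \<in> HH" and x: "x \<in> carrier_vec r"
    have hc: "h \<in> carrier_mat m r" using HH_c[OF h] .
    have "\<Phi> (h *\<^sub>v x, 0\<^sub>v m) = (PV (h *\<^sub>v x), snd (\<Phi> (h *\<^sub>v x, 0\<^sub>v m)))" unfolding PV_def by simp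
    thus "\<Phi> (h *\<^sub>v x, 0\<^sub>v m) = (A h *\<^sub>v x, 0\<^sub>v m)" using Aspec[OF hc] off1[OF h x] x by simp
  qed
  have Drep: "\<forall>f\<in>HD. \<forall>t\<in>carrier_vec r. \<Phi> (0\<^sub>v m, f *\<^sub>v t) = (0\<^sub>v m, D f *\<^sub>v t)"
  proof (intro ballI)
    fix f and t :: "complex vec" assume f: "f \<in> HD" and t: "t \<in> carrier_vec r"
    have fc: "f \<in> carrier_mat m r" using HD_c[OF f] .
    have "\<Phi> (0\<^sub>v m, f *\<^sub>v t) = (fst (\<Phi> (0\<^sub>v m, f *\<^sub>v t)), PD (f *\<^sub>v t))" unfolding PD_def by simp
    thus "\<Phi> (0\<^sub>v m, f *\<^sub>v t) = (0\<^sub>v m, D f *\<^sub>v t)" using Dspec[OF fc] off2[OF f t] t by simp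
  qed
  show ?thesis
    by (rule exI[of _ A], rule exI[of _ D]) (use AH DH Alin Dlin Arep Drep in auto)
qed

end



lemma zmat_vec: "(v :: complex vec) \<in> carrier_vec r \<Longrightarrow> 0\<^sub>m m r *\<^sub>v v = 0\<^sub>v m"
  by (rule eq_vecI) auto

lemma hp_zero1: "X \<in> carrier_mat m r \<Longrightarrow> hom_pairing r (0\<^sub>m m r) (X :: complex mat) = 0"
  unfolding hom_pairing_def
proof (rule sum.neutral, rule ballI)
  fix i assume X: "X \<in> carrier_mat m r" and "i \<in> {..<r}"
  hence i: "i < r" by simp
  have "(0\<^sub>m m r :: complex mat) *\<^sub>v unit_vec r i = 0\<^sub>v m" using zmat_vec[of "unit_vec r i" r m] i by simp
  moreover have "X *\<^sub>v unit_vec r i \<in> carrier_vec m" using X by simp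
  ultimately show "(0\<^sub>m m r *\<^sub>v unit_vec r i) \<bullet> (X *\<^sub>v unit_vec r i) = 0" by simp
qed

lemma hp_zero2: "X \<in> carrier_mat m r \<Longrightarrow> hom_pairing r (X :: complex mat) (0\<^sub>m m r) = 0"
  unfolding hom_pairing_def
proof (rule sum.neutral, rule ballI)
  fix i assume X: "X \<in> carrier_mat m r" and "i \<in> {..<r}"
  hence i: "i < r" by simp
  have "(0\<^sub>m m r :: complex mat) *\<^sub>v unit_vec r i = 0\<^sub>v m" using zmat_vec[of "unit_vec r i" r m] i by simp
  moreover have "X *\<^sub>v unit_vec r i \<in> carrier_vec m" using X by simp
  ultimately show "(X *\<^sub>v unit_vec r i) \<bullet> (0\<^sub>m m r *\<^sub>v unit_vec r i) = 0" by simp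
qed


lemma csub_ker:
  fixes L :: "complex vec \<Rightarrow> complex vec"
  assumes la: "\<And>v w. v \<in> carrier_vec m \<Longrightarrow> w \<in> carrier_vec m \<Longrightarrow> L (v + w) = L v + L w"
    and ls: "\<And>c v. v \<in> carrier_vec m \<Longrightarrow> L (c \<cdot>\<^sub>v v) = c \<cdot>\<^sub>v L v"
    and l0: "L (0\<^sub>v m) = 0\<^sub>v m"
  shows "csubspace_of m {v \<in> carrier_vec m. L v = 0\<^sub>v m}"
  unfolding csubspace_of_def
proof (intro conjI ballI allI)
  fix a b assume "a \<in> {v \<in> carrier_vec m. L v = 0\<^sub>v m}" "b \<in> {v \<in> carrier_vec m. L v = 0\<^sub>v m}"
  thus "a + b \<in> {v \<in> carrier_vec m. L v = 0\<^sub>v m}" using la by auto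
next
  fix c a assume "a \<in> {v \<in> carrier_vec m. L v = 0\<^sub>v m}"
  thus "c \<cdot>\<^sub>v a \<in> {v \<in> carrier_vec m. L v = 0\<^sub>v m}" using ls by (auto intro!: eq_vecI)
qed (use l0 in auto)

lemma csub_img:
  fixes L :: "complex vec \<Rightarrow> complex vec"
  assumes la: "\<And>v w. v \<in> carrier_vec m \<Longrightarrow> w \<in> carrier_vec m \<Longrightarrow> L (v + w) = L v + L w"
    and ls: "\<And>c v. v \<in> carrier_vec m \<Longrightarrow> L (c \<cdot>\<^sub>v v) = c \<cdot>\<^sub>v L v"
    and l0: "L (0\<^sub>v m) = 0\<^sub>v m"
    and lc: "\<And>v. v \<in> carrier_vec m \<Longrightarrow> L v \<in> carrier_vec m"
  shows "csubspace_of m {v \<in> carrier_vec m. \<exists>v'\<in>carrier_vec m. L v' = v}"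
  unfolding csubspace_of_def
proof (intro conjI ballI allI)
  fix a b assume a: "a \<in> {v \<in> carrier_vec m. \<exists>v'\<in>carrier_vec m. L v' = v}"
    and b: "b \<in> {v \<in> carrier_vec m. \<exists>v'\<in>carrier_vec m. L v' = v}"
  then obtain a' b' where "a' \<in> carrier_vec m" "b' \<in> carrier_vec m" "L a' = a" "L b' = b" by auto
  thus "a + b \<in> {v \<in> carrier_vec m. \<exists>v'\<in>carrier_vec m. L v' = v}"
    using la a b by (auto intro!: bexI[of _ "a' + b'"])
next
  fix c a assume a: "a \<in> {v \<in> carrier_vec m. \<exists>v'\<in>carrier_vec m. L v' = v}"
  then obtain a' where "a' \<in> carrier_vec m" "L a' = a" by auto
  thus "c \<cdot>\<^sub>v a \<in> {v \<in> carrier_vec m. \<exists>v'\<in>carrier_vec m. L v' = v}"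
    using ls a by (auto intro!: bexI[of _ "c \<cdot>\<^sub>v a'"])
qed (use l0 in \<open>auto intro!: bexI[of _ "0\<^sub>v m"]\<close>)

context phi_setting
begin

lemma PV0: "PV (0\<^sub>v m) = 0\<^sub>v m" unfolding PV_def using P0 by simp
lemma PD0: "PD (0\<^sub>v m) = 0\<^sub>v m" unfolding PD_def using P0 by simp

lemma inv_phi:
  assumes bij: "bij_betw \<Phi> (carrier_vec m \<times> carrier_vec m) (carrier_vec m \<times> carrier_vec m)"
  shows "phi_setting G T r \<rho> m \<sigma> (inv_into (carrier_vec m \<times> carrier_vec m) \<Phi>)"
proof -
  let ?VV = "carrier_vec m \<times> carrier_vec m :: (complex vec \<times> complex vec) set"
  let ?\<Psi> = "inv_into ?VV \<Phi>"
  have inj: "inj_on \<Phi> ?VV" and img: "\<Phi> ` ?VV = ?VV" using bij unfolding bij_betw_def by auto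
  have Pin: "?\<Psi> x \<in> ?VV" if "x \<in> ?VV" for x using inv_into_into[of x \<Phi> ?VV] img that by simp
  have PP: "\<Phi> (?\<Psi> x) = x" if "x \<in> ?VV" for x using f_inv_into_f[of x \<Phi> ?VV] img that by simp
  have PsiPhi: "?\<Psi> (\<Phi> a) = a" if "a \<in> ?VV" for a using inv_into_f_f[OF inj that] .
  have vaV: "vpair_add a b \<in> ?VV" if "a \<in> ?VV" "b \<in> ?VV" for a b
    using that unfolding vpair_add_def by auto
  have vsV: "vpair_smult c a \<in> ?VV" if "a \<in> ?VV" for a c
    using that unfolding vpair_smult_def by auto
  have linA: "\<forall>x\<in>?VV. \<forall>y\<in>?VV. \<Phi> (vpair_add x y) = vpair_add (\<Phi> x) (\<Phi> y)"
    and linS: "\<forall>c. \<forall>x\<in>?VV. \<Phi> (vpair_smult c x) = vpair_smult c (\<Phi> x)"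
    using \<Phi>_linear unfolding clinear_on_def by auto
  show ?thesis
  proof (intro phi_setting.intro setting_axioms phi_setting_axioms.intro)
    show "?\<Psi> ` ?VV \<subseteq> ?VV" by (rule image_subsetI, rule Pin)
    show "clinear_on ?VV ?\<Psi> vpair_add vpair_smult vpair_add vpair_smult"
      unfolding clinear_on_def
    proof (intro conjI ballI allI)
      fix x y assume x: "x \<in> ?VV" and y: "y \<in> ?VV"
      have "\<Phi> (vpair_add (?\<Psi> x) (?\<Psi> y)) = vpair_add (\<Phi> (?\<Psi> x)) (\<Phi> (?\<Psi> y))"
        using linA[rule_format, OF Pin[OF x] Pin[OF y]] .
      also have "\<dots> = vpair_add x y" using PP x y by simp
      finally have "?\<Psi> (vpair_add x y) = ?\<Psi> (\<Phi> (vpair_add (?\<Psi> x) (?\<Psi> y)))" by simp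
      also have "\<dots> = vpair_add (?\<Psi> x) (?\<Psi> y)" using PsiPhi vaV Pin x y by simp
      finally show "?\<Psi> (vpair_add x y) = vpair_add (?\<Psi> x) (?\<Psi> y)" .
    next
      fix c x assume x: "x \<in> ?VV"
      have "\<Phi> (vpair_smult c (?\<Psi> x)) = vpair_smult c (\<Phi> (?\<Psi> x))"
        using linS[rule_format, OF Pin[OF x]] .
      also have "\<dots> = vpair_smult c x" using PP x by simp
      finally have "?\<Psi> (vpair_smult c x) = ?\<Psi> (\<Phi> (vpair_smult c (?\<Psi> x)))" by simp
      also have "\<dots> = vpair_smult c (?\<Psi> x)" using PsiPhi vsV Pin x by simp
      finally show "?\<Psi> (vpair_smult c x) = vpair_smult c (?\<Psi> x)" .
    qed
    show "\<forall>g\<in>carrier G. \<forall>v\<in>carrier_vec m. \<forall>f\<in>carrier_vec m.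
          ?\<Psi> (\<sigma> g *\<^sub>v v, dual_rep G \<sigma> g *\<^sub>v f)
            = (\<sigma> g *\<^sub>v fst (?\<Psi> (v, f)), dual_rep G \<sigma> g *\<^sub>v snd (?\<Psi> (v, f)))"
    proof (intro ballI)
      fix g and v f :: "complex vec" assume g: "g \<in> carrier G" and v: "v \<in> carrier_vec m" and f: "f \<in> carrier_vec m"
      obtain a b where ab: "?\<Psi> (v, f) = (a, b)" by (cases "?\<Psi> (v, f)") auto
      have abV: "a \<in> carrier_vec m" "b \<in> carrier_vec m" using Pin[of "(v, f)"] v f ab by auto
      have Pab: "\<Phi> (a, b) = (v, f)" using PP[of "(v, f)"] v f ab by simp
      have "\<Phi> (\<sigma> g *\<^sub>v a, dual_rep G \<sigma> g *\<^sub>v b) = (\<sigma> g *\<^sub>v v, dual_rep G \<sigma> g *\<^sub>v f)"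
        using \<Phi>_eq g abV Pab by (metis fst_conv snd_conv)
      moreover have "(\<sigma> g *\<^sub>v a, dual_rep G \<sigma> g *\<^sub>v b) \<in> ?VV"
        using abV sigma_c[OF g] sigmad_c[OF g] by simp
      ultimately have "?\<Psi> (\<sigma> g *\<^sub>v v, dual_rep G \<sigma> g *\<^sub>v f) = (\<sigma> g *\<^sub>v a, dual_rep G \<sigma> g *\<^sub>v b)"
        using PsiPhi by metis
      thus "?\<Psi> (\<sigma> g *\<^sub>v v, dual_rep G \<sigma> g *\<^sub>v f)
            = (\<sigma> g *\<^sub>v fst (?\<Psi> (v, f)), dual_rep G \<sigma> g *\<^sub>v snd (?\<Psi> (v, f)))" using ab by simp
    qed
  qed
qed

end

locale AD_setting = phi_setting +
  fixes A D :: "complex mat \<Rightarrow> complex mat"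
  assumes AH: "A ` HH \<subseteq> HH" and Alin: "clinear_on HH A (+) (\<cdot>\<^sub>m) (+) (\<cdot>\<^sub>m)"
    and DH: "D ` HD \<subseteq> HD" and Dlin: "clinear_on HD D (+) (\<cdot>\<^sub>m) (+) (\<cdot>\<^sub>m)"
    and Arep: "\<forall>h\<in>HH. \<forall>x\<in>carrier_vec r. \<Phi> (h *\<^sub>v x, 0\<^sub>v m) = (A h *\<^sub>v x, 0\<^sub>v m)"
    and Drep: "\<forall>f\<in>HD. \<forall>t\<in>carrier_vec r. \<Phi> (0\<^sub>v m, f *\<^sub>v t) = (0\<^sub>v m, D f *\<^sub>v t)"
begin

lemma AHc: "h \<in> HH \<Longrightarrow> A h \<in> HH" using AH by auto
lemma DHc: "f \<in> HD \<Longrightarrow> D f \<in> HD" using DH by auto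

lemma PV_gen: "h \<in> HH \<Longrightarrow> x \<in> carrier_vec r \<Longrightarrow> PV (h *\<^sub>v x) = A h *\<^sub>v x"
  unfolding PV_def using Arep by simp
lemma PD_gen: "f \<in> HD \<Longrightarrow> t \<in> carrier_vec r \<Longrightarrow> PD (f *\<^sub>v t) = D f *\<^sub>v t"
  unfolding PD_def using Drep by simp

lemma A0: "A (0\<^sub>m m r) = 0\<^sub>m m r"
proof -
  have "A (0 \<cdot>\<^sub>m 0\<^sub>m m r) = 0 \<cdot>\<^sub>m A (0\<^sub>m m r)" using Alin zero_HH unfolding clinear_on_def by blast
  moreover have "0 \<cdot>\<^sub>m 0\<^sub>m m r = (0\<^sub>m m r :: complex mat)" by (rule eq_matI) auto
  moreover have "0 \<cdot>\<^sub>m A (0\<^sub>m m r) = 0\<^sub>m m r"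
    using HH_c[OF AHc[OF zero_HH]] by (intro eq_matI) auto
  ultimately show ?thesis by simp
qed

lemma D0: "D (0\<^sub>m m r) = 0\<^sub>m m r"
proof -
  have "D (0 \<cdot>\<^sub>m 0\<^sub>m m r) = 0 \<cdot>\<^sub>m D (0\<^sub>m m r)" using Dlin zero_HD unfolding clinear_on_def by blast
  moreover have "0 \<cdot>\<^sub>m 0\<^sub>m m r = (0\<^sub>m m r :: complex mat)" by (rule eq_matI) auto
  moreover have "0 \<cdot>\<^sub>m D (0\<^sub>m m r) = 0\<^sub>m m r"
    using HD_c[OF DHc[OF zero_HD]] by (intro eq_matI) auto
  ultimately show ?thesis by simp
qed

lemma fb: "form_b (a, b) (c, d) = b \<bullet> c + d \<bullet> a" unfolding form_b_def by simp
lemma fs: "form_s r (a, b) (c, d) = hom_pairing r b c + hom_pairing r d a" unfolding form_s_def by simp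

lemma ext_both:
  assumes lin1: "\<And>w. w \<in> carrier_vec m \<Longrightarrow> csubspace_of m {v \<in> carrier_vec m. Pr w v}"
    and lin2: "\<And>v. v \<in> carrier_vec m \<Longrightarrow> csubspace_of m {w \<in> carrier_vec m. Pr w v}"
    and gen: "\<And>f h t x. f \<in> HD \<Longrightarrow> h \<in> HH \<Longrightarrow> t \<in> carrier_vec r \<Longrightarrow> x \<in> carrier_vec r \<Longrightarrow> Pr (f *\<^sub>v t) (h *\<^sub>v x)"
    and w: "w \<in> carrier_vec m" and v: "v \<in> carrier_vec m"
  shows "Pr w v"
proof -
  have step1: "\<forall>v\<in>carrier_vec m. Pr (f *\<^sub>v t) v" if f: "f \<in> HD" and t: "t \<in> carrier_vec r" for f t
  proof -
    have ft: "f *\<^sub>v t \<in> carrier_vec m" using HD_c[OF f] t by simp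
    have "{v \<in> carrier_vec m. Pr (f *\<^sub>v t) v} = carrier_vec m"
    proof (rule SPAN[OF lin1[OF ft]])
      show "\<forall>h\<in>HH. \<forall>x\<in>carrier_vec r. h *\<^sub>v x \<in> {v \<in> carrier_vec m. Pr (f *\<^sub>v t) v}"
      proof (intro ballI)
        fix h and x :: "complex vec" assume h: "h \<in> HH" and x: "x \<in> carrier_vec r"
        show "h *\<^sub>v x \<in> {v \<in> carrier_vec m. Pr (f *\<^sub>v t) v}" using gen[OF f h t x] HH_c[OF h] x by simp
      qed
    qed
    thus ?thesis by auto
  qed
  have "{w \<in> carrier_vec m. Pr w v} = carrier_vec m"
  proof (rule SPANd[OF lin2[OF v]])
    show "\<forall>F\<in>HD. \<forall>t\<in>carrier_vec r. F *\<^sub>v t \<in> {w \<in> carrier_vec m. Pr w v}"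
    proof (intro ballI)
      fix F and t :: "complex vec" assume F: "F \<in> HD" and t: "t \<in> carrier_vec r"
      show "F *\<^sub>v t \<in> {w \<in> carrier_vec m. Pr w v}" using step1[OF F t] v HD_c[OF F] t by simp
    qed
  qed
  thus ?thesis using w by auto
qed

lemma inf_iff:
  "respects_infinitesimally (carrier_vec m \<times> carrier_vec m) form_b \<Phi>
   \<longleftrightarrow> respects_infinitesimally (HH \<times> HD) (form_s r) (\<lambda>(h, f). (A h, D f))"
proof
  assume R: "respects_infinitesimally (carrier_vec m \<times> carrier_vec m) form_b \<Phi>"
  have Q: "hom_pairing r (D f) h + hom_pairing r f (A h) = 0" if f: "f \<in> HD" and h: "h \<in> HH" for f h
  proof -
    have "hom_pairing r (D f) h + hom_pairing r f (A h)
        = (\<Sum>i<r. (D f *\<^sub>v unit_vec r i) \<bullet> (h *\<^sub>v unit_vec r i) + (f *\<^sub>v unit_vec r i) \<bullet> (A h *\<^sub>v unit_vec r i))"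
      unfolding hom_pairing_def by (simp add: sum.distrib)
    also have "\<dots> = (\<Sum>i<r. 0)"
    proof (rule sum.cong)
      fix i assume "i \<in> {..<r}"
      hence i: "i < r" by simp
      let ?e = "unit_vec r i"
      have e: "?e \<in> carrier_vec r" using i by simp
      have fe: "f *\<^sub>v ?e \<in> carrier_vec m" and he: "h *\<^sub>v ?e \<in> carrier_vec m"
        using HD_c[OF f] HH_c[OF h] e by auto
      have "form_b (\<Phi> (0\<^sub>v m, f *\<^sub>v ?e)) (h *\<^sub>v ?e, 0\<^sub>v m) + form_b (0\<^sub>v m, f *\<^sub>v ?e) (\<Phi> (h *\<^sub>v ?e, 0\<^sub>v m)) = 0"
        using R fe he unfolding respects_infinitesimally_def by auto
      moreover have "\<Phi> (0\<^sub>v m, f *\<^sub>v ?e) = (0\<^sub>v m, D f *\<^sub>v ?e)" using Drep f e by simp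
      moreover have "\<Phi> (h *\<^sub>v ?e, 0\<^sub>v m) = (A h *\<^sub>v ?e, 0\<^sub>v m)" using Arep h e by simp
      ultimately show "(D f *\<^sub>v ?e) \<bullet> (h *\<^sub>v ?e) + (f *\<^sub>v ?e) \<bullet> (A h *\<^sub>v ?e) = 0"
        using HD_c[OF DHc[OF f]] HH_c[OF AHc[OF h]] e fe he by (simp add: fb)
    qed simp
    finally show ?thesis by simp
  qed
  show "respects_infinitesimally (HH \<times> HD) (form_s r) (\<lambda>(h, f). (A h, D f))"
    unfolding respects_infinitesimally_def
  proof (intro ballI)
    fix w1 w2 assume w1: "w1 \<in> HH \<times> HD" and w2: "w2 \<in> HH \<times> HD"
    obtain h1 f1 where 1: "w1 = (h1, f1)" "h1 \<in> HH" "f1 \<in> HD" using w1 by auto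
    obtain h2 f2 where 2: "w2 = (h2, f2)" "h2 \<in> HH" "f2 \<in> HD" using w2 by auto
    show "form_s r ((\<lambda>(h, f). (A h, D f)) w1) w2 + form_s r w1 ((\<lambda>(h, f). (A h, D f)) w2) = 0"
    proof -
      have e1: "hom_pairing r f1 (A h2) + hom_pairing r (D f1) h2 = 0" using Q[OF 1(3) 2(2)] by (simp add: add.commute)
      have e2: "hom_pairing r f2 (A h1) + hom_pairing r (D f2) h1 = 0" using Q[OF 2(3) 1(2)] by (simp add: add.commute)
      have "form_s r ((\<lambda>(h, f). (A h, D f)) w1) w2 + form_s r w1 ((\<lambda>(h, f). (A h, D f)) w2)
          = (hom_pairing r f1 (A h2) + hom_pairing r (D f1) h2) + (hom_pairing r f2 (A h1) + hom_pairing r (D f2) h1)"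
        unfolding 1 2 by (simp add: fs algebra_simps)
      thus ?thesis using e1 e2 by simp
    qed
  qed
next
  assume S: "respects_infinitesimally (HH \<times> HD) (form_s r) (\<lambda>(h, f). (A h, D f))"
  have hp: "hom_pairing r f (A h) + 1 * hom_pairing r (D f) h = 0" if f: "f \<in> HD" and h: "h \<in> HH" for f h
  proof -
    have "form_s r (A h, D (0\<^sub>m m r)) (0\<^sub>m m r, f) + form_s r (h, 0\<^sub>m m r) (A (0\<^sub>m m r), D f) = 0"
      using S f h zero_HH zero_HD unfolding respects_infinitesimally_def by fastforce
    thus ?thesis unfolding fs A0 D0
      using hp_zero1 hp_zero2 HH_c[OF AHc[OF h]] HD_c[OF DHc[OF f]] HH_c[OF h] HD_c[OF f] by simp
  qed
  define Pr where "Pr w v = (w \<bullet> PV v + PD w \<bullet> v = 0)" for w v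
  have allPr: "Pr w v" if w: "w \<in> carrier_vec m" and v: "v \<in> carrier_vec m" for w v
  proof (rule ext_both[of Pr, OF _ _ _ w v])
    fix w :: "complex vec" assume w: "w \<in> carrier_vec m"
    show "csubspace_of m {v \<in> carrier_vec m. Pr w v}"
      unfolding csubspace_of_def Pr_def
    proof (intro conjI ballI allI)
      show "0\<^sub>v m \<in> {v \<in> carrier_vec m. w \<bullet> PV v + PD w \<bullet> v = 0}"
        using w P0 PD_c[OF w] unfolding PV_def by simp
      fix a b assume a: "a \<in> {v \<in> carrier_vec m. w \<bullet> PV v + PD w \<bullet> v = 0}"
        and b: "b \<in> {v \<in> carrier_vec m. w \<bullet> PV v + PD w \<bullet> v = 0}"
      have ac: "a \<in> carrier_vec m" and bc: "b \<in> carrier_vec m" using a b by auto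
      have "w \<bullet> PV (a + b) + PD w \<bullet> (a + b) = (w \<bullet> PV a + PD w \<bullet> a) + (w \<bullet> PV b + PD w \<bullet> b)"
        using ac bc w PV_add PV_c[OF ac] PV_c[OF bc] PD_c[OF w]
        by (simp add: scalar_prod_add_distrib[of _ m] algebra_simps)
      thus "a + b \<in> {v \<in> carrier_vec m. w \<bullet> PV v + PD w \<bullet> v = 0}" using a b by simp
    next
      fix c a assume a: "a \<in> {v \<in> carrier_vec m. w \<bullet> PV v + PD w \<bullet> v = 0}"
      have ac: "a \<in> carrier_vec m" using a by auto
      have "w \<bullet> PV (c \<cdot>\<^sub>v a) + PD w \<bullet> (c \<cdot>\<^sub>v a) = c * (w \<bullet> PV a + PD w \<bullet> a)"
        using ac w PV_sm[OF ac] PV_c[OF ac] PD_c[OF w] by (simp add: algebra_simps)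
      thus "c \<cdot>\<^sub>v a \<in> {v \<in> carrier_vec m. w \<bullet> PV v + PD w \<bullet> v = 0}" using a by simp
    qed auto
  next
    fix v :: "complex vec" assume v: "v \<in> carrier_vec m"
    show "csubspace_of m {w \<in> carrier_vec m. Pr w v}"
      unfolding csubspace_of_def Pr_def
    proof (intro conjI ballI allI)
      show "0\<^sub>v m \<in> {w \<in> carrier_vec m. w \<bullet> PV v + PD w \<bullet> v = 0}"
        using v P0 PV_c[OF v] unfolding PD_def by simp
      fix a b assume a: "a \<in> {w \<in> carrier_vec m. w \<bullet> PV v + PD w \<bullet> v = 0}"
        and b: "b \<in> {w \<in> carrier_vec m. w \<bullet> PV v + PD w \<bullet> v = 0}"
      have ac: "a \<in> carrier_vec m" and bc: "b \<in> carrier_vec m" using a b by auto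
      have "(a + b) \<bullet> PV v + PD (a + b) \<bullet> v = (a \<bullet> PV v + PD a \<bullet> v) + (b \<bullet> PV v + PD b \<bullet> v)"
        using ac bc v PD_add PD_c[OF ac] PD_c[OF bc] PV_c[OF v]
        by (simp add: add_scalar_prod_distrib[of _ m] algebra_simps)
      thus "a + b \<in> {w \<in> carrier_vec m. w \<bullet> PV v + PD w \<bullet> v = 0}" using a b by simp
    next
      fix c a assume a: "a \<in> {w \<in> carrier_vec m. w \<bullet> PV v + PD w \<bullet> v = 0}"
      have ac: "a \<in> carrier_vec m" using a by auto
      have "(c \<cdot>\<^sub>v a) \<bullet> PV v + PD (c \<cdot>\<^sub>v a) \<bullet> v = c * (a \<bullet> PV v + PD a \<bullet> v)"
        using ac v PD_sm[OF ac] PD_c[OF ac] PV_c[OF v] by (simp add: algebra_simps)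
      thus "c \<cdot>\<^sub>v a \<in> {w \<in> carrier_vec m. w \<bullet> PV v + PD w \<bullet> v = 0}" using a by simp
    qed auto
  next
    fix f h and t x :: "complex vec" assume f: "f \<in> HD" and h: "h \<in> HH" and t: "t \<in> carrier_vec r" and x: "x \<in> carrier_vec r"
    show "Pr (f *\<^sub>v t) (h *\<^sub>v x)"
      unfolding Pr_def PV_gen[OF h x] PD_gen[OF f t]
      using pair_zero[OF f AHc[OF h] DHc[OF f] h hp[OF f h] t x] by simp
  qed
  show "respects_infinitesimally (carrier_vec m \<times> carrier_vec m) form_b \<Phi>"
    unfolding respects_infinitesimally_def
  proof (intro ballI)
    fix w1 w2 :: "complex vec \<times> complex vec"
    assume w1: "w1 \<in> carrier_vec m \<times> carrier_vec m" and w2: "w2 \<in> carrier_vec m \<times> carrier_vec m"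
    obtain v1 f1 where 1: "w1 = (v1, f1)" "v1 \<in> carrier_vec m" "f1 \<in> carrier_vec m" using w1 by auto
    obtain v2 f2 where 2: "w2 = (v2, f2)" "v2 \<in> carrier_vec m" "f2 \<in> carrier_vec m" using w2 by auto
    have "form_b (\<Phi> w1) w2 + form_b w1 (\<Phi> w2) = (f1 \<bullet> PV v2 + PD f1 \<bullet> v2) + (f2 \<bullet> PV v1 + PD f2 \<bullet> v1)"
      unfolding 1 2 B3[OF 1(2,3)] B3[OF 2(2,3)] fb by (simp add: algebra_simps)
    thus "form_b (\<Phi> w1) w2 + form_b w1 (\<Phi> w2) = 0"
      using allPr[OF 1(3) 2(2)] allPr[OF 2(3) 1(2)] unfolding Pr_def by simp
  qed
qed


lemma iso_iff:
  "respects_isometry (carrier_vec m \<times> carrier_vec m) form_b \<Phi>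
   \<longleftrightarrow> respects_isometry (HH \<times> HD) (form_s r) (\<lambda>(h, f). (A h, D f))"
proof
  let ?VV = "carrier_vec m \<times> carrier_vec m :: (complex vec \<times> complex vec) set"
  let ?M = "\<lambda>(h, f). (A h, D f)"
  assume R: "respects_isometry ?VV form_b \<Phi>"
  have bij: "bij_betw \<Phi> ?VV ?VV" and pres: "\<forall>w1\<in>?VV. \<forall>w2\<in>?VV. form_b (\<Phi> w1) (\<Phi> w2) = form_b w1 w2"
    using R unfolding respects_isometry_def by auto
  have inj: "inj_on \<Phi> ?VV" and img: "\<Phi> ` ?VV = ?VV" using bij unfolding bij_betw_def by auto
  have key: "hom_pairing r (D f) (A h) = hom_pairing r f h" if f: "f \<in> HD" and h: "h \<in> HH" for f h
    unfolding hom_pairing_def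
  proof (rule sum.cong)
    fix i assume "i \<in> {..<r}"
    hence i: "i < r" by simp
    let ?e = "unit_vec r i"
    have e: "?e \<in> carrier_vec r" using i by simp
    have fe: "f *\<^sub>v ?e \<in> carrier_vec m" and he: "h *\<^sub>v ?e \<in> carrier_vec m"
      using HD_c[OF f] HH_c[OF h] e by auto
    have "form_b (\<Phi> (0\<^sub>v m, f *\<^sub>v ?e)) (\<Phi> (h *\<^sub>v ?e, 0\<^sub>v m)) = form_b (0\<^sub>v m, f *\<^sub>v ?e) (h *\<^sub>v ?e, 0\<^sub>v m)"
      using pres fe he by auto
    moreover have "\<Phi> (0\<^sub>v m, f *\<^sub>v ?e) = (0\<^sub>v m, D f *\<^sub>v ?e)" using Drep f e by simp
    moreover have "\<Phi> (h *\<^sub>v ?e, 0\<^sub>v m) = (A h *\<^sub>v ?e, 0\<^sub>v m)" using Arep h e by simp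
    ultimately show "(D f *\<^sub>v ?e) \<bullet> (A h *\<^sub>v ?e) = (f *\<^sub>v ?e) \<bullet> (h *\<^sub>v ?e)"
      using HD_c[OF DHc[OF f]] HH_c[OF AHc[OF h]] e fe he by (simp add: fb)
  qed simp
  interpret I: phi_setting G T r \<rho> m \<sigma> "inv_into ?VV \<Phi>" by (rule inv_phi[OF bij])
  obtain B E where BE: "B ` HH \<subseteq> HH" "E ` HD \<subseteq> HD"
    "\<forall>h\<in>HH. \<forall>x\<in>carrier_vec r. inv_into ?VV \<Phi> (h *\<^sub>v x, 0\<^sub>v m) = (B h *\<^sub>v x, 0\<^sub>v m)"
    "\<forall>f\<in>HD. \<forall>t\<in>carrier_vec r. inv_into ?VV \<Phi> (0\<^sub>v m, f *\<^sub>v t) = (0\<^sub>v m, E f *\<^sub>v t)"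
    using I.P1 by blast
  have PP: "\<Phi> (inv_into ?VV \<Phi> y) = y" if "y \<in> ?VV" for y using f_inv_into_f[of y \<Phi> ?VV] img that by simp
  have surjA: "A (B h) = h" if h: "h \<in> HH" for h
  proof (rule mat_eq_vecI[of _ m r])
    have Bh: "B h \<in> HH" using BE(1) h by auto
    show "A (B h) \<in> carrier_mat m r" "h \<in> carrier_mat m r" using HH_c[OF AHc[OF Bh]] HH_c[OF h] by auto
    fix x :: "complex vec" assume x: "x \<in> carrier_vec r"
    have hx: "(h *\<^sub>v x, 0\<^sub>v m) \<in> ?VV" using HH_c[OF h] x by simp
    have "(A (B h) *\<^sub>v x, 0\<^sub>v m) = \<Phi> (B h *\<^sub>v x, 0\<^sub>v m)" using Arep Bh x by simp
    also have "\<dots> = \<Phi> (inv_into ?VV \<Phi> (h *\<^sub>v x, 0\<^sub>v m))" using BE(3) h x by simp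
    also have "\<dots> = (h *\<^sub>v x, 0\<^sub>v m)" using PP[OF hx] .
    finally show "A (B h) *\<^sub>v x = h *\<^sub>v x" by simp
  qed
  have surjD: "D (E f) = f" if f: "f \<in> HD" for f
  proof (rule mat_eq_vecI[of _ m r])
    have Ef: "E f \<in> HD" using BE(2) f by auto
    show "D (E f) \<in> carrier_mat m r" "f \<in> carrier_mat m r" using HD_c[OF DHc[OF Ef]] HD_c[OF f] by auto
    fix x :: "complex vec" assume x: "x \<in> carrier_vec r"
    have fx: "(0\<^sub>v m, f *\<^sub>v x) \<in> ?VV" using HD_c[OF f] x by simp
    have "(0\<^sub>v m, D (E f) *\<^sub>v x) = \<Phi> (0\<^sub>v m, E f *\<^sub>v x)" using Drep Ef x by simp
    also have "\<dots> = \<Phi> (inv_into ?VV \<Phi> (0\<^sub>v m, f *\<^sub>v x))" using BE(4) f x by simp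
    also have "\<dots> = (0\<^sub>v m, f *\<^sub>v x)" using PP[OF fx] .
    finally show "D (E f) *\<^sub>v x = f *\<^sub>v x" by simp
  qed
  have injA: "h1 = h2" if h1: "h1 \<in> HH" and h2: "h2 \<in> HH" and e: "A h1 = A h2" for h1 h2
  proof (rule mat_eq_vecI[of _ m r])
    show "h1 \<in> carrier_mat m r" "h2 \<in> carrier_mat m r" using HH_c h1 h2 by auto
    fix x :: "complex vec" assume x: "x \<in> carrier_vec r"
    have "\<Phi> (h1 *\<^sub>v x, 0\<^sub>v m) = \<Phi> (h2 *\<^sub>v x, 0\<^sub>v m)" using Arep h1 h2 x e by simp
    moreover have "(h1 *\<^sub>v x, 0\<^sub>v m) \<in> ?VV" "(h2 *\<^sub>v x, 0\<^sub>v m) \<in> ?VV" using HH_c[OF h1] HH_c[OF h2] x by auto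
    ultimately have "(h1 *\<^sub>v x, 0\<^sub>v m) = (h2 *\<^sub>v x, 0\<^sub>v m)" using inj unfolding inj_on_def by blast
    thus "h1 *\<^sub>v x = h2 *\<^sub>v x" by simp
  qed
  have injD: "f1 = f2" if f1: "f1 \<in> HD" and f2: "f2 \<in> HD" and e: "D f1 = D f2" for f1 f2
  proof (rule mat_eq_vecI[of _ m r])
    show "f1 \<in> carrier_mat m r" "f2 \<in> carrier_mat m r" using HD_c f1 f2 by auto
    fix x :: "complex vec" assume x: "x \<in> carrier_vec r"
    have "\<Phi> (0\<^sub>v m, f1 *\<^sub>v x) = \<Phi> (0\<^sub>v m, f2 *\<^sub>v x)" using Drep f1 f2 x e by simp
    moreover have "(0\<^sub>v m, f1 *\<^sub>v x) \<in> ?VV" "(0\<^sub>v m, f2 *\<^sub>v x) \<in> ?VV" using HD_c[OF f1] HD_c[OF f2] x by auto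
    ultimately have "(0\<^sub>v m, f1 *\<^sub>v x) = (0\<^sub>v m, f2 *\<^sub>v x)" using inj unfolding inj_on_def by blast
    thus "f1 *\<^sub>v x = f2 *\<^sub>v x" by simp
  qed
  have "bij_betw ?M (HH \<times> HD) (HH \<times> HD)"
    unfolding bij_betw_def
  proof (intro conjI)
    show "inj_on ?M (HH \<times> HD)"
      by (rule inj_onI) (auto intro: injA injD)
    show "?M ` (HH \<times> HD) = HH \<times> HD"
    proof
      show "?M ` (HH \<times> HD) \<subseteq> HH \<times> HD" using AHc DHc by auto
      show "HH \<times> HD \<subseteq> ?M ` (HH \<times> HD)"
      proof
        fix w assume "w \<in> HH \<times> HD"
        then obtain h f where w: "w = (h, f)" "h \<in> HH" "f \<in> HD" by auto
        have "?M (B h, E f) = w" using surjA[OF w(2)] surjD[OF w(3)] w(1) by simp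
        moreover have "(B h, E f) \<in> HH \<times> HD" using BE(1,2) w by auto
        ultimately show "w \<in> ?M ` (HH \<times> HD)" by force
      qed
    qed
  qed
  moreover have "\<forall>w1\<in>HH \<times> HD. \<forall>w2\<in>HH \<times> HD. form_s r (?M w1) (?M w2) = form_s r w1 w2"
  proof (intro ballI)
    fix w1 w2 assume w1: "w1 \<in> HH \<times> HD" and w2: "w2 \<in> HH \<times> HD"
    obtain h1 f1 where 1: "w1 = (h1, f1)" "h1 \<in> HH" "f1 \<in> HD" using w1 by auto
    obtain h2 f2 where 2: "w2 = (h2, f2)" "h2 \<in> HH" "f2 \<in> HD" using w2 by auto
    show "form_s r (?M w1) (?M w2) = form_s r w1 w2"
      unfolding 1 2 using key[OF 1(3) 2(2)] key[OF 2(3) 1(2)] by (simp add: fs)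
  qed
  ultimately show "respects_isometry (HH \<times> HD) (form_s r) ?M"
    unfolding respects_isometry_def by blast
next
  let ?VV = "carrier_vec m \<times> carrier_vec m :: (complex vec \<times> complex vec) set"
  let ?M = "\<lambda>(h, f). (A h, D f)"
  assume S: "respects_isometry (HH \<times> HD) (form_s r) ?M"
  have bijM: "bij_betw ?M (HH \<times> HD) (HH \<times> HD)"
    and presM: "\<forall>w1\<in>HH \<times> HD. \<forall>w2\<in>HH \<times> HD. form_s r (?M w1) (?M w2) = form_s r w1 w2"
    using S unfolding respects_isometry_def by auto
  have injM: "inj_on ?M (HH \<times> HD)" and imgM: "?M ` (HH \<times> HD) = HH \<times> HD"
    using bijM unfolding bij_betw_def by auto
  have sA: "\<exists>h'\<in>HH. A h' = h" if h: "h \<in> HH" for h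
  proof -
    have "(h, 0\<^sub>m m r) \<in> ?M ` (HH \<times> HD)" using imgM h zero_HD by auto
    thus ?thesis by auto
  qed
  have sD: "\<exists>f'\<in>HD. D f' = f" if f: "f \<in> HD" for f
  proof -
    have "(0\<^sub>m m r, f) \<in> ?M ` (HH \<times> HD)" using imgM f zero_HH by auto
    thus ?thesis by auto
  qed
  have iA: "h1 = h2" if "h1 \<in> HH" "h2 \<in> HH" "A h1 = A h2" for h1 h2
  proof -
    have "?M (h1, 0\<^sub>m m r) = ?M (h2, 0\<^sub>m m r)" using that by simp
    hence "(h1, 0\<^sub>m m r) = (h2, 0\<^sub>m m r)" using injM that zero_HD unfolding inj_on_def by blast
    thus ?thesis by simp
  qed
  have iD: "f1 = f2" if "f1 \<in> HD" "f2 \<in> HD" "D f1 = D f2" for f1 f2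
  proof -
    have "?M (0\<^sub>m m r, f1) = ?M (0\<^sub>m m r, f2)" using that by simp
    hence "(0\<^sub>m m r, f1) = (0\<^sub>m m r, f2)" using injM that zero_HH unfolding inj_on_def by blast
    thus ?thesis by simp
  qed
  have hp: "hom_pairing r (D f) (A h) + (-1) * hom_pairing r f h = 0" if f: "f \<in> HD" and h: "h \<in> HH" for f h
  proof -
    have "form_s r (?M (h, 0\<^sub>m m r)) (?M (0\<^sub>m m r, f)) = form_s r (h, 0\<^sub>m m r) (0\<^sub>m m r, f)"
      using presM f h zero_HH zero_HD by blast
    hence "form_s r (A h, D (0\<^sub>m m r)) (A (0\<^sub>m m r), D f) = form_s r (h, 0\<^sub>m m r) (0\<^sub>m m r, f)" by simp
    thus ?thesis unfolding fs A0 D0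
      using hp_zero1 hp_zero2 HH_c[OF AHc[OF h]] HD_c[OF DHc[OF f]] HH_c[OF h] HD_c[OF f] by simp
  qed
  define Pr where "Pr w v = (PD w \<bullet> PV v = w \<bullet> v)" for w v
  have allPr: "Pr w v" if w: "w \<in> carrier_vec m" and v: "v \<in> carrier_vec m" for w v
  proof (rule ext_both[of Pr, OF _ _ _ w v])
    fix w :: "complex vec" assume w: "w \<in> carrier_vec m"
    show "csubspace_of m {v \<in> carrier_vec m. Pr w v}"
      unfolding csubspace_of_def Pr_def
    proof (intro conjI ballI allI)
      show "0\<^sub>v m \<in> {v \<in> carrier_vec m. PD w \<bullet> PV v = w \<bullet> v}"
        using w PV0 PD_c[OF w] by simp
      fix a b assume a: "a \<in> {v \<in> carrier_vec m. PD w \<bullet> PV v = w \<bullet> v}"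
        and b: "b \<in> {v \<in> carrier_vec m. PD w \<bullet> PV v = w \<bullet> v}"
      have ac: "a \<in> carrier_vec m" and bc: "b \<in> carrier_vec m" using a b by auto
      have "PD w \<bullet> PV (a + b) = PD w \<bullet> PV a + PD w \<bullet> PV b"
        using ac bc PV_add PV_c[OF ac] PV_c[OF bc] PD_c[OF w] by (simp add: scalar_prod_add_distrib[of _ m])
      moreover have "w \<bullet> (a + b) = w \<bullet> a + w \<bullet> b" using ac bc w by (simp add: scalar_prod_add_distrib[of _ m])
      ultimately show "a + b \<in> {v \<in> carrier_vec m. PD w \<bullet> PV v = w \<bullet> v}" using a b by simp
    next
      fix c a assume a: "a \<in> {v \<in> carrier_vec m. PD w \<bullet> PV v = w \<bullet> v}"
      have ac: "a \<in> carrier_vec m" using a by auto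
      have "PD w \<bullet> PV (c \<cdot>\<^sub>v a) = c * (PD w \<bullet> PV a)"
        using ac PV_sm[OF ac] PV_c[OF ac] PD_c[OF w] by simp
      moreover have "w \<bullet> (c \<cdot>\<^sub>v a) = c * (w \<bullet> a)" using ac w by simp
      ultimately show "c \<cdot>\<^sub>v a \<in> {v \<in> carrier_vec m. PD w \<bullet> PV v = w \<bullet> v}" using a by simp
    qed auto
  next
    fix v :: "complex vec" assume v: "v \<in> carrier_vec m"
    show "csubspace_of m {w \<in> carrier_vec m. Pr w v}"
      unfolding csubspace_of_def Pr_def
    proof (intro conjI ballI allI)
      show "0\<^sub>v m \<in> {w \<in> carrier_vec m. PD w \<bullet> PV v = w \<bullet> v}"
        using v PD0 PV_c[OF v] by simp
      fix a b assume a: "a \<in> {w \<in> carrier_vec m. PD w \<bullet> PV v = w \<bullet> v}"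
        and b: "b \<in> {w \<in> carrier_vec m. PD w \<bullet> PV v = w \<bullet> v}"
      have ac: "a \<in> carrier_vec m" and bc: "b \<in> carrier_vec m" using a b by auto
      have "PD (a + b) \<bullet> PV v = PD a \<bullet> PV v + PD b \<bullet> PV v"
        using ac bc PD_add PD_c[OF ac] PD_c[OF bc] PV_c[OF v] by (simp add: add_scalar_prod_distrib[of _ m])
      moreover have "(a + b) \<bullet> v = a \<bullet> v + b \<bullet> v" using ac bc v by (simp add: add_scalar_prod_distrib[of _ m])
      ultimately show "a + b \<in> {w \<in> carrier_vec m. PD w \<bullet> PV v = w \<bullet> v}" using a b by simp
    next
      fix c a assume a: "a \<in> {w \<in> carrier_vec m. PD w \<bullet> PV v = w \<bullet> v}"
      have ac: "a \<in> carrier_vec m" using a by auto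
      have "PD (c \<cdot>\<^sub>v a) \<bullet> PV v = c * (PD a \<bullet> PV v)"
        using ac PD_sm[OF ac] PD_c[OF ac] PV_c[OF v] by simp
      moreover have "(c \<cdot>\<^sub>v a) \<bullet> v = c * (a \<bullet> v)" using ac v by simp
      ultimately show "c \<cdot>\<^sub>v a \<in> {w \<in> carrier_vec m. PD w \<bullet> PV v = w \<bullet> v}" using a by simp
    qed auto
  next
    fix f h and t x :: "complex vec" assume f: "f \<in> HD" and h: "h \<in> HH" and t: "t \<in> carrier_vec r" and x: "x \<in> carrier_vec r"
    show "Pr (f *\<^sub>v t) (h *\<^sub>v x)"
      unfolding Pr_def PV_gen[OF h x] PD_gen[OF f t]
      using pair_zero[OF DHc[OF f] AHc[OF h] f h hp[OF f h] t x] by simp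
  qed
  have pres: "\<forall>w1\<in>?VV. \<forall>w2\<in>?VV. form_b (\<Phi> w1) (\<Phi> w2) = form_b w1 w2"
  proof (intro ballI)
    fix w1 w2 :: "complex vec \<times> complex vec"
    assume w1: "w1 \<in> ?VV" and w2: "w2 \<in> ?VV"
    obtain v1 f1 where 1: "w1 = (v1, f1)" "v1 \<in> carrier_vec m" "f1 \<in> carrier_vec m" using w1 by auto
    obtain v2 f2 where 2: "w2 = (v2, f2)" "v2 \<in> carrier_vec m" "f2 \<in> carrier_vec m" using w2 by auto
    have "form_b (\<Phi> w1) (\<Phi> w2) = PD f1 \<bullet> PV v2 + PD f2 \<bullet> PV v1"
      unfolding 1 2 B3[OF 1(2,3)] B3[OF 2(2,3)] fb by simp
    also have "\<dots> = f1 \<bullet> v2 + f2 \<bullet> v1" using allPr[OF 1(3) 2(2)] allPr[OF 2(3) 1(2)] unfolding Pr_def by simp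
    also have "\<dots> = form_b w1 w2" unfolding 1 2 fb by simp
    finally show "form_b (\<Phi> w1) (\<Phi> w2) = form_b w1 w2" .
  qed
  text \<open>injectivity of the diagonal blocks\<close>
  have kerV: "v = 0\<^sub>v m" if v: "v \<in> carrier_vec m" "PV v = 0\<^sub>v m" for v
  proof -
    define K where "K = {v \<in> carrier_vec m. PV v = 0\<^sub>v m}"
    have invK: "invariant_subspace G m \<sigma> K"
      unfolding invariant_subspace_def
    proof (intro conjI ballI)
      show "csubspace_of m K" unfolding K_def by (rule csub_ker) (use PV_add PV_sm PV0 in auto)
      fix g w assume g: "g \<in> carrier G" and w: "w \<in> K"
      show "\<sigma> g *\<^sub>v w \<in> K" using w PV_eq[OF g] sigma_c[OF g] s0[OF g] unfolding K_def by auto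
    qed
    have "K = {0\<^sub>v m}"
    proof (rule ccontr)
      assume ne: "K \<noteq> {0\<^sub>v m}"
      obtain h where h: "h \<in> HH" "\<exists>x\<in>carrier_vec r. h *\<^sub>v x \<noteq> 0\<^sub>v m" "\<forall>x\<in>carrier_vec r. h *\<^sub>v x \<in> K"
        using KER[OF invK ne] by blast
      have "A h = A (0\<^sub>m m r)"
      proof (rule mat_eq_vecI[of _ m r])
        show "A h \<in> carrier_mat m r" "A (0\<^sub>m m r) \<in> carrier_mat m r"
          using HH_c[OF AHc[OF h(1)]] HH_c[OF AHc[OF zero_HH]] by auto
        fix x :: "complex vec" assume x: "x \<in> carrier_vec r"
        have "A h *\<^sub>v x = PV (h *\<^sub>v x)" using PV_gen[OF h(1) x] by simp
        also have "\<dots> = 0\<^sub>v m" using h(3) x unfolding K_def by auto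
        also have "\<dots> = A (0\<^sub>m m r) *\<^sub>v x" unfolding A0 using zmat_vec[OF x] by simp
        finally show "A h *\<^sub>v x = A (0\<^sub>m m r) *\<^sub>v x" .
      qed
      hence "h = 0\<^sub>m m r" using iA h(1) zero_HH by blast
      thus False using h(2) zmat_vec by auto
    qed
    thus ?thesis using v unfolding K_def by auto
  qed
  have kerD: "f = 0\<^sub>v m" if f: "f \<in> carrier_vec m" "PD f = 0\<^sub>v m" for f
  proof -
    define K where "K = {v \<in> carrier_vec m. PD v = 0\<^sub>v m}"
    have invK: "invariant_subspace G m (dual_rep G \<sigma>) K"
      unfolding invariant_subspace_def
    proof (intro conjI ballI)
      show "csubspace_of m K" unfolding K_def by (rule csub_ker) (use PD_add PD_sm PD0 in auto)
      fix g w assume g: "g \<in> carrier G" and w: "w \<in> K"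
      show "dual_rep G \<sigma> g *\<^sub>v w \<in> K" using w PD_eq[OF g] sigmad_c[OF g] sd0[OF g] unfolding K_def by auto
    qed
    have "K = {0\<^sub>v m}"
    proof (rule ccontr)
      assume ne: "K \<noteq> {0\<^sub>v m}"
      obtain h where h: "h \<in> HD" "\<exists>x\<in>carrier_vec r. h *\<^sub>v x \<noteq> 0\<^sub>v m" "\<forall>x\<in>carrier_vec r. h *\<^sub>v x \<in> K"
        using KERd[OF invK ne] by blast
      have "D h = D (0\<^sub>m m r)"
      proof (rule mat_eq_vecI[of _ m r])
        show "D h \<in> carrier_mat m r" "D (0\<^sub>m m r) \<in> carrier_mat m r"
          using HD_c[OF DHc[OF h(1)]] HD_c[OF DHc[OF zero_HD]] by auto
        fix x :: "complex vec" assume x: "x \<in> carrier_vec r"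
        have "D h *\<^sub>v x = PD (h *\<^sub>v x)" using PD_gen[OF h(1) x] by simp
        also have "\<dots> = 0\<^sub>v m" using h(3) x unfolding K_def by auto
        also have "\<dots> = D (0\<^sub>m m r) *\<^sub>v x" unfolding D0 using zmat_vec[OF x] by simp
        finally show "D h *\<^sub>v x = D (0\<^sub>m m r) *\<^sub>v x" .
      qed
      hence "h = 0\<^sub>m m r" using iD h(1) zero_HD by blast
      thus False using h(2) zmat_vec by auto
    qed
    thus ?thesis using f unfolding K_def by auto
  qed
  have surjV: "\<exists>v'\<in>carrier_vec m. PV v' = v" if v: "v \<in> carrier_vec m" for v
  proof -
    define U where "U = {v \<in> carrier_vec m. \<exists>v'\<in>carrier_vec m. PV v' = v}"
    have "U = carrier_vec m"
    proof (rule SPAN)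
      show "csubspace_of m U" unfolding U_def by (rule csub_img) (use PV_add PV_sm PV0 PV_c in auto)
      show "\<forall>h\<in>HH. \<forall>x\<in>carrier_vec r. h *\<^sub>v x \<in> U"
      proof (intro ballI)
        fix h and x :: "complex vec" assume h: "h \<in> HH" and x: "x \<in> carrier_vec r"
        obtain h' where h': "h' \<in> HH" "A h' = h" using sA[OF h] by blast
        have "PV (h' *\<^sub>v x) = h *\<^sub>v x" using PV_gen[OF h'(1) x] h'(2) by simp
        moreover have "h' *\<^sub>v x \<in> carrier_vec m" using HH_c[OF h'(1)] x by simp
        ultimately show "h *\<^sub>v x \<in> U" unfolding U_def using HH_c[OF h] x by auto
      qed
    qed
    thus ?thesis using v unfolding U_def by auto
  qed
  have surjF: "\<exists>v'\<in>carrier_vec m. PD v' = v" if v: "v \<in> carrier_vec m" for v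
  proof -
    define U where "U = {v \<in> carrier_vec m. \<exists>v'\<in>carrier_vec m. PD v' = v}"
    have "U = carrier_vec m"
    proof (rule SPANd)
      show "csubspace_of m U" unfolding U_def by (rule csub_img) (use PD_add PD_sm PD0 PD_c in auto)
      show "\<forall>h\<in>HD. \<forall>x\<in>carrier_vec r. h *\<^sub>v x \<in> U"
      proof (intro ballI)
        fix h and x :: "complex vec" assume h: "h \<in> HD" and x: "x \<in> carrier_vec r"
        obtain h' where h': "h' \<in> HD" "D h' = h" using sD[OF h] by blast
        have "PD (h' *\<^sub>v x) = h *\<^sub>v x" using PD_gen[OF h'(1) x] h'(2) by simp
        moreover have "h' *\<^sub>v x \<in> carrier_vec m" using HD_c[OF h'(1)] x by simp
        ultimately show "h *\<^sub>v x \<in> U" unfolding U_def using HD_c[OF h] x by auto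
      qed
    qed
    thus ?thesis using v unfolding U_def by auto
  qed
  have "bij_betw \<Phi> ?VV ?VV"
    unfolding bij_betw_def
  proof (intro conjI)
    show "inj_on \<Phi> ?VV"
    proof (rule inj_onI)
      fix w1 w2 :: "complex vec \<times> complex vec"
      assume w1: "w1 \<in> ?VV" and w2: "w2 \<in> ?VV" and e: "\<Phi> w1 = \<Phi> w2"
      obtain v1 f1 where 1: "w1 = (v1, f1)" "v1 \<in> carrier_vec m" "f1 \<in> carrier_vec m" using w1 by auto
      obtain v2 f2 where 2: "w2 = (v2, f2)" "v2 \<in> carrier_vec m" "f2 \<in> carrier_vec m" using w2 by auto
      have ev: "PV v1 = PV v2" and ef: "PD f1 = PD f2" using e unfolding 1 2 B3[OF 1(2,3)] B3[OF 2(2,3)] by auto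
      have "PV (v1 + (-1) \<cdot>\<^sub>v v2) = 0\<^sub>v m"
        using PV_add PV_sm 1 2 ev vec_sub_self[OF PV_c[OF 2(2)]] by simp
      hence "v1 + (-1) \<cdot>\<^sub>v v2 = 0\<^sub>v m" using kerV 1 2 by simp
      hence "v1 = v2" using vec_sub_zero 1 2 by blast
      moreover have "PD (f1 + (-1) \<cdot>\<^sub>v f2) = 0\<^sub>v m"
        using PD_add PD_sm 1 2 ef vec_sub_self[OF PD_c[OF 2(3)]] by simp
      hence "f1 + (-1) \<cdot>\<^sub>v f2 = 0\<^sub>v m" using kerD 1 2 by simp
      hence "f1 = f2" using vec_sub_zero 1 2 by blast
      ultimately show "w1 = w2" using 1 2 by simp
    qed
    show "\<Phi> ` ?VV = ?VV"
    proof
      show "\<Phi> ` ?VV \<subseteq> ?VV" using \<Phi>_maps .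
      show "?VV \<subseteq> \<Phi> ` ?VV"
      proof
        fix w :: "complex vec \<times> complex vec" assume "w \<in> ?VV"
        then obtain v f where w: "w = (v, f)" "v \<in> carrier_vec m" "f \<in> carrier_vec m" by auto
        obtain v' where v': "v' \<in> carrier_vec m" "PV v' = v" using surjV[OF w(2)] by blast
        obtain f' where f': "f' \<in> carrier_vec m" "PD f' = f" using surjF[OF w(3)] by blast
        have "\<Phi> (v', f') = w" using B3[OF v'(1) f'(1)] v' f' w by simp
        thus "w \<in> \<Phi> ` ?VV" using v' f' by force
      qed
    qed
  qed
  thus "respects_isometry ?VV form_b \<Phi>" using pres unfolding respects_isometry_def by blast
qed

end

theorem proposition3p10:
  fixes G :: "('g, 'b) monoid_scheme" and T :: "'g topology"
    and r :: nat and \<rho> :: "'g \<Rightarrow> complex mat"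
    and m :: nat and \<sigma> :: "'g \<Rightarrow> complex mat"
    and \<Phi> :: "complex vec \<times> complex vec \<Rightarrow> complex vec \<times> complex vec"
  defines "H \<equiv> hom_space G r \<rho> m \<sigma>"
    and "Hd \<equiv> hom_space G r (dual_rep G \<rho>) m (dual_rep G \<sigma>)"
    and "VV \<equiv> carrier_vec m \<times> carrier_vec m"
  assumes G0: "compact_group G T"
    and R_rep: "unitary_rep G T r \<rho>" and R_irr: "irreducible_rep G r \<rho>"
    and V_rep: "unitary_rep G T m \<sigma>"
    and V_isotypic: "\<forall>W. irreducible_subrep G m \<sigma> W \<longrightarrow> rep_iso_to G r \<rho> m \<sigma> W"
    and R_not_self_dual: "\<not> rep_iso_to G r \<rho> r (dual_rep G \<rho>) (carrier_vec r)"
    and \<Phi>_maps: "\<Phi> ` VV \<subseteq> VV"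
    and \<Phi>_linear: "clinear_on VV \<Phi> vpair_add vpair_smult vpair_add vpair_smult"
    and \<Phi>_equivariant: "\<forall>g\<in>carrier G. \<forall>v\<in>carrier_vec m. \<forall>f\<in>carrier_vec m.
          \<Phi> (\<sigma> g *\<^sub>v v, dual_rep G \<sigma> g *\<^sub>v f)
            = (\<sigma> g *\<^sub>v fst (\<Phi> (v, f)), dual_rep G \<sigma> g *\<^sub>v snd (\<Phi> (v, f)))"
  shows "(\<exists>A D. A ` H \<subseteq> H \<and> clinear_on H A (+) (\<cdot>\<^sub>m) (+) (\<cdot>\<^sub>m)
            \<and> D ` Hd \<subseteq> Hd \<and> clinear_on Hd D (+) (\<cdot>\<^sub>m) (+) (\<cdot>\<^sub>m)
            \<and> (\<forall>h\<in>H. \<forall>x\<in>carrier_vec r. \<Phi> (h *\<^sub>v x, 0\<^sub>v m) = (A h *\<^sub>v x, 0\<^sub>v m))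
            \<and> (\<forall>f\<in>Hd. \<forall>t\<in>carrier_vec r. \<Phi> (0\<^sub>v m, f *\<^sub>v t) = (0\<^sub>v m, D f *\<^sub>v t)))
       \<and> (\<forall>A D. A ` H \<subseteq> H \<and> clinear_on H A (+) (\<cdot>\<^sub>m) (+) (\<cdot>\<^sub>m)
            \<and> D ` Hd \<subseteq> Hd \<and> clinear_on Hd D (+) (\<cdot>\<^sub>m) (+) (\<cdot>\<^sub>m)
            \<and> (\<forall>h\<in>H. \<forall>x\<in>carrier_vec r. \<Phi> (h *\<^sub>v x, 0\<^sub>v m) = (A h *\<^sub>v x, 0\<^sub>v m))
            \<and> (\<forall>f\<in>Hd. \<forall>t\<in>carrier_vec r. \<Phi> (0\<^sub>v m, f *\<^sub>v t) = (0\<^sub>v m, D f *\<^sub>v t))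
          \<longrightarrow> (respects_isometry VV form_b \<Phi>
                 \<longleftrightarrow> respects_isometry (H \<times> Hd) (form_s r) (\<lambda>(h, f). (A h, D f)))
            \<and> (respects_infinitesimally VV form_b \<Phi>
                 \<longleftrightarrow> respects_infinitesimally (H \<times> Hd) (form_s r) (\<lambda>(h, f). (A h, D f))))"
proof -
  have grp: "group G" using G0 unfolding compact_group_def by simp
  interpret S: phi_setting G T r \<rho> m \<sigma> \<Phi>
  proof (intro phi_setting.intro setting.intro phi_setting_axioms.intro)
    show "group G" by (rule grp)
    show "unitary_rep G T r \<rho>" by (rule R_rep)
    show "irreducible_rep G r \<rho>" by (rule R_irr)
    show "unitary_rep G T m \<sigma>" by (rule V_rep)
    show "\<forall>W. irreducible_subrep G m \<sigma> W \<longrightarrow> rep_iso_to G r \<rho> m \<sigma> W" by (rule V_isotypic)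
    show "\<not> rep_iso_to G r \<rho> r (dual_rep G \<rho>) (carrier_vec r)" by (rule R_not_self_dual)
    show "\<Phi> ` (carrier_vec m \<times> carrier_vec m) \<subseteq> carrier_vec m \<times> carrier_vec m"
      using \<Phi>_maps unfolding VV_def .
    show "clinear_on (carrier_vec m \<times> carrier_vec m) \<Phi> vpair_add vpair_smult vpair_add vpair_smult"
      using \<Phi>_linear unfolding VV_def .
    show "\<forall>g\<in>carrier G. \<forall>v\<in>carrier_vec m. \<forall>f\<in>carrier_vec m.
          \<Phi> (\<sigma> g *\<^sub>v v, dual_rep G \<sigma> g *\<^sub>v f)
            = (\<sigma> g *\<^sub>v fst (\<Phi> (v, f)), dual_rep G \<sigma> g *\<^sub>v snd (\<Phi> (v, f)))"
      by (rule \<Phi>_equivariant)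
  qed
  show ?thesis
  proof (intro conjI allI impI)
    show "\<exists>A D. A ` H \<subseteq> H \<and> clinear_on H A (+) (\<cdot>\<^sub>m) (+) (\<cdot>\<^sub>m)
            \<and> D ` Hd \<subseteq> Hd \<and> clinear_on Hd D (+) (\<cdot>\<^sub>m) (+) (\<cdot>\<^sub>m)
            \<and> (\<forall>h\<in>H. \<forall>x\<in>carrier_vec r. \<Phi> (h *\<^sub>v x, 0\<^sub>v m) = (A h *\<^sub>v x, 0\<^sub>v m))
            \<and> (\<forall>f\<in>Hd. \<forall>t\<in>carrier_vec r. \<Phi> (0\<^sub>v m, f *\<^sub>v t) = (0\<^sub>v m, D f *\<^sub>v t))"
      unfolding H_def Hd_def by (rule S.P1)
  next
    fix A D
    assume AD: "A ` H \<subseteq> H \<and> clinear_on H A (+) (\<cdot>\<^sub>m) (+) (\<cdot>\<^sub>m)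
            \<and> D ` Hd \<subseteq> Hd \<and> clinear_on Hd D (+) (\<cdot>\<^sub>m) (+) (\<cdot>\<^sub>m)
            \<and> (\<forall>h\<in>H. \<forall>x\<in>carrier_vec r. \<Phi> (h *\<^sub>v x, 0\<^sub>v m) = (A h *\<^sub>v x, 0\<^sub>v m))
            \<and> (\<forall>f\<in>Hd. \<forall>t\<in>carrier_vec r. \<Phi> (0\<^sub>v m, f *\<^sub>v t) = (0\<^sub>v m, D f *\<^sub>v t))"
    interpret X: AD_setting G T r \<rho> m \<sigma> \<Phi> A D
      by (intro AD_setting.intro S.phi_setting_axioms AD_setting_axioms.intro) (use AD in \<open>simp_all add: H_def Hd_def\<close>)
    show "respects_isometry VV form_b \<Phi> \<longleftrightarrow> respects_isometry (H \<times> Hd) (form_s r) (\<lambda>(h, f). (A h, D f))"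
      unfolding VV_def H_def Hd_def by (rule X.iso_iff)
    show "respects_infinitesimally VV form_b \<Phi> \<longleftrightarrow> respects_infinitesimally (H \<times> Hd) (form_s r) (\<lambda>(h, f). (A h, D f))"
      unfolding VV_def H_def Hd_def by (rule X.inf_iff)
  qed
qed

end
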